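(* Let $\Phi(z)\in K(z)$ have degree $d\ge1$; put $B_0=B_0(\Phi)$ and $c_0=\Phi(0)$. Assume $\Phi$ has no poles in $D(0,B_0)^-$, so that $\Phi(D(0,B_0)^-)=D(c_0,R)^-$ for some $R>0$. Suppose $|c_0|\le1$ and $R\le1$. Then $\mathrm{Lip}_{\mathrm{Berk}}(\Phi|_{[0,\zeta_{0,B_0}]})\le d/B_0$.
   Context: $K$ is a complete, algebraically closed field with a nontrivial nonarchimedean absolute value. $D(a,r)^-=\{z\in K:|z-a|<r\}$. Fix $q>1$. $\mathbf P^1_{\mathrm{Berk}}$ is the Berkovich projective line over $K$ (tree containing $\mathbf P^1(K)$); $\zeta_{a,r}$ is the point of the disc $D(a,r)=\{|z-a|\le r\}$, $\zeta_{a,0}=a$, $\zeta_G=\zeta_{0,1}$; $[x,y]$ unique path, $(x,y]$ half-open. $\rho$ is the logarithmic path metric on $\mathbf H^1=\mathbf P^1_{\mathrm{Berk}}\setminus\mathbf P^1(K)$ (path $\{\zeta_{a,r}:R_1\le r\le R_2\}$ has length $\log_q(R_2/R_1)$); $\mathrm{diam}_G(x)=q^{-\rho(\zeta_G,x)}$ on $\mathbf H^1$, $0$ on $\mathbf P^1(K)$. $x\vee_G y$ first common point of $[x,\zeta_G],[y,\zeta_G]$; $d(x,y)=2\mathrm{diam}_G(x\vee_G y)-\mathrm{diam}_G(x)-\mathrm{diam}_G(y)$. For $S\subseteq\mathbf P^1_{\mathrm{Berk}}$, $\mathrm{Lip}_{\mathrm{Berk}}(\Phi|_S)=\sup_{x\ne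 y\in S}d(\Phi x,\Phi y)/d(x,y)$. For $a\in\mathbf P^1(K)$, $0<r<1$, $Q_{a,r}$ is the point of $[a,\zeta_G]$ with $\mathrm{diam}_G=r$, $\mathcal B(a,r)^-=\{x:Q_{a,r}\in(x,\zeta_G]\}$, $\mathcal B(a,1)^-=\bigcup_{r<1}\mathcal B(a,r)^-$; $B_0(\Phi)=\sup\{0<r\le1:\Phi(\mathcal B(a,r)^-)\ne\mathbf P^1_{\mathrm{Berk}}\ \forall a\in\mathbf P^1(K)\}$. *)

theory Defs
  imports "HOL-Computational_Algebra.Polynomial" "HOL-Library.Extended_Real"
begin

definition nonarch_cac_field :: "('a::field \<Rightarrow> real) \<Rightarrow> bool" where
  "nonarch_cac_field absv \<longleftrightarrow>
     (\<forall>x. absv x \<ge> 0) \<and> (\<forall>x. absv x = 0 \<longleftrightarrow> x = 0) \<and>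
     (\<forall>x y. absv (x * y) = absv x * absv y) \<and>
     (\<forall>x y. absv (x + y) \<le> max (absv x) (absv y)) \<and>
     (\<exists>x. absv x \<noteq> 0 \<and> absv x \<noteq> 1) \<and>
     (\<forall>s :: nat \<Rightarrow> 'a. (\<forall>e>0. \<exists>N. \<forall>m\<ge>N. \<forall>n\<ge>N. absv (s m - s n) < e) \<longrightarrow>
          (\<exists>l. \<forall>e>0. \<exists>N. \<forall>n\<ge>N. absv (s n - l) < e)) \<and>
     (\<forall>p :: 'a poly. degree p \<ge> 1 \<longrightarrow> (\<exists>z. poly p z = 0))"

text \<open>A point of the Berkovich affine line is a multiplicative seminorm on K[T]
  extending absv; the Berkovich projective line adds the point infinity (None).\<close>

type_synonym 'a bsn = "'a poly \<Rightarrow> real"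
type_synonym 'a berk = "'a bsn option"

definition is_berk_aff :: "('a::field \<Rightarrow> real) \<Rightarrow> 'a bsn \<Rightarrow> bool" where
  "is_berk_aff absv N \<longleftrightarrow>
     (\<forall>f. N f \<ge> 0) \<and> (\<forall>f g. N (f * g) = N f * N g) \<and>
     (\<forall>f g. N (f + g) \<le> N f + N g) \<and> (\<forall>c. N [:c:] = absv c)"

definition Berk :: "('a::field \<Rightarrow> real) \<Rightarrow> 'a berk set" where
  "Berk absv = insert None (Some ` {N. is_berk_aff absv N})"

definition typeI :: "('a::field \<Rightarrow> real) \<Rightarrow> 'a \<Rightarrow> 'a bsn" where
  "typeI absv a = (\<lambda>f. absv (poly f a))"

definition P1K :: "('a::field \<Rightarrow> real) \<Rightarrow> 'a berk set" where
  "P1K absv = insert None (range (\<lambda>a. Some (typeI absv a)))"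

text \<open>zeta_{a,r}: sup norm on the disc D(a,r); zeta_{a,0} = a.\<close>
definition zeta :: "('a::field \<Rightarrow> real) \<Rightarrow> 'a \<Rightarrow> real \<Rightarrow> 'a bsn" where
  "zeta absv a r = (\<lambda>f. Max ((\<lambda>i. absv (coeff (pcompose f [:a, 1:]) i) * r ^ i) ` {..degree f}))"

definition zetaG :: "('a::field \<Rightarrow> real) \<Rightarrow> 'a berk" where
  "zetaG absv = Some (zeta absv 0 1)"

definition inv_poly :: "'a::field poly \<Rightarrow> 'a poly" where
  "inv_poly f = (\<Sum>i\<le>degree f. monom (coeff f i) (degree f - i))"

definition berk_inv :: "('a::field \<Rightarrow> real) \<Rightarrow> 'a berk \<Rightarrow> 'a berk" where
  "berk_inv absv x = (case x of None \<Rightarrow> Some (typeI absv 0)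
     | Some N \<Rightarrow> if N [:0, 1:] = 0 then None
                 else Some (\<lambda>f. N (inv_poly f) / N [:0, 1:] ^ degree f))"

definition in_cdisc :: "'a::field berk \<Rightarrow> bool" where
  "in_cdisc x \<longleftrightarrow> (\<exists>N. x = Some N \<and> N [:0, 1:] \<le> 1)"

definition berk_le :: "'a::field berk \<Rightarrow> 'a berk \<Rightarrow> bool" where
  "berk_le x y \<longleftrightarrow> (\<exists>N M. x = Some N \<and> y = Some M \<and> (\<forall>f. N f \<le> M f))"

text \<open>on_path_G absv x y  <->  y lies on the path [x, zeta_G].  Inside the closed unit
  Berkovich disc this is the usual (pointwise) order of seminorms; outside it, one
  uses the coordinate 1/z.\<close>
definition on_path_G :: "('a::field \<Rightarrow> real) \<Rightarrow> 'a berk \<Rightarrow> 'a berk \<Rightarrow> bool" where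
  "on_path_G absv x y \<longleftrightarrow>
     (if in_cdisc x then in_cdisc y \<and> berk_le x y
      else in_cdisc (berk_inv absv y) \<and> berk_le (berk_inv absv x) (berk_inv absv y))"

definition rad :: "'a::field bsn \<Rightarrow> real" where
  "rad N = (INF a. N [:-a, 1:])"

text \<open>diam_G(x) = q^(-rho(zeta_G,x)) (independent of q).\<close>
definition diamG :: "('a::field \<Rightarrow> real) \<Rightarrow> 'a berk \<Rightarrow> real" where
  "diamG absv x = (case x of None \<Rightarrow> 0
     | Some N \<Rightarrow> if N [:0, 1:] \<le> 1 then rad N
                 else (case berk_inv absv x of None \<Rightarrow> 0 | Some M \<Rightarrow> rad M))"

definition joinG :: "('a::field \<Rightarrow> real) \<Rightarrow> 'a berk \<Rightarrow> 'a berk \<Rightarrow> 'a berk" where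
  "joinG absv x y = (THE z. z \<in> Berk absv \<and> on_path_G absv x z \<and> on_path_G absv y z \<and>
      (\<forall>w\<in>Berk absv. on_path_G absv x w \<and> on_path_G absv y w \<longrightarrow> on_path_G absv z w))"

definition berk_dist :: "('a::field \<Rightarrow> real) \<Rightarrow> 'a berk \<Rightarrow> 'a berk \<Rightarrow> real" where
  "berk_dist absv x y = 2 * diamG absv (joinG absv x y) - diamG absv x - diamG absv y"

definition Lip_Berk :: "('a::field \<Rightarrow> real) \<Rightarrow> ('a berk \<Rightarrow> 'a berk) \<Rightarrow> 'a berk set \<Rightarrow> ereal" where
  "Lip_Berk absv \<Phi> S = (SUP p \<in> {(x, y). x \<in> S \<and> y \<in> S \<and> x \<noteq> y}.
      ereal (berk_dist absv (\<Phi> (fst p)) (\<Phi> (snd p)) / berk_dist absv (fst p) (snd p)))"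

text \<open>Phi = P/Q; for a seminorm x with [Q]_x \<noteq> 0, [f]_{Phi(x)} = [f(P/Q)]_x.\<close>
definition subst_rat :: "'a::field poly \<Rightarrow> 'a poly \<Rightarrow> 'a poly \<Rightarrow> 'a poly" where
  "subst_rat P Q f = (\<Sum>i\<le>degree f. smult (coeff f i) (P ^ i * Q ^ (degree f - i)))"

definition rat_berk :: "('a::field \<Rightarrow> real) \<Rightarrow> 'a poly \<Rightarrow> 'a poly \<Rightarrow> 'a berk \<Rightarrow> 'a berk" where
  "rat_berk absv P Q x = (case x of
       None \<Rightarrow> if degree P > degree Q then None
               else Some (typeI absv (coeff P (degree Q) / lead_coeff Q))
     | Some N \<Rightarrow> if N Q = 0 then None
                 else Some (\<lambda>f. N (subst_rat P Q f) / N Q ^ degree f))"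

definition Qpt :: "('a::field \<Rightarrow> real) \<Rightarrow> 'a berk \<Rightarrow> real \<Rightarrow> 'a berk" where
  "Qpt absv a r = (THE y. y \<in> Berk absv \<and> on_path_G absv a y \<and> diamG absv y = r)"

definition ball_minus :: "('a::field \<Rightarrow> real) \<Rightarrow> 'a berk \<Rightarrow> real \<Rightarrow> 'a berk set" where
  "ball_minus absv a r =
     (if r < 1 then {x \<in> Berk absv. on_path_G absv x (Qpt absv a r) \<and> Qpt absv a r \<noteq> x}
      else (\<Union>s\<in>{s. 0 < s \<and> s < 1}. {x \<in> Berk absv. on_path_G absv x (Qpt absv a s) \<and> Qpt absv a s \<noteq> x}))"

definition B0 :: "('a::field \<Rightarrow> real) \<Rightarrow> ('a berk \<Rightarrow> 'a berk) \<Rightarrow> real" where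
  "B0 absv \<Phi> = Sup {r. 0 < r \<and> r \<le> 1 \<and>
      (\<forall>a\<in>P1K absv. \<Phi> ` ball_minus absv a r \<noteq> Berk absv)}"

end

theory Submission
  imports Defs
begin

locale nf =
  fixes absv :: "'a::field \<Rightarrow> real"
  assumes K: "nonarch_cac_field absv"
begin

lemma av_nonneg[simp]: "absv x \<ge> 0" using K unfolding nonarch_cac_field_def by blast
lemma av_eq0[simp]: "absv x = 0 \<longleftrightarrow> x = 0" using K unfolding nonarch_cac_field_def by blast
lemma av_mult: "absv (x * y) = absv x * absv y" using K unfolding nonarch_cac_field_def by blast
lemma av_add: "absv (x + y) \<le> max (absv x) (absv y)" using K unfolding nonarch_cac_field_def by blast
lemma av_nontriv: "\<exists>x. absv x \<noteq> 0 \<and> absv x \<noteq> 1" using K unfolding nonarch_cac_field_def by blast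
lemma av_closed: fixes p :: "'a poly" assumes "degree p \<ge> 1" shows "\<exists>z. poly p z = 0"
proof -
  have H: "\<forall>p::'a poly. 1 \<le> degree p \<longrightarrow> (\<exists>z. poly p z = 0)" using K unfolding nonarch_cac_field_def by simp
  show ?thesis using H assms by blast
qed

lemma av_pos: "x \<noteq> 0 \<Longrightarrow> absv x > 0"
  using av_nonneg[of x] av_eq0[of x] by linarith

lemma av_0[simp]: "absv 0 = 0" by simp

lemma av_1[simp]: "absv 1 = 1"
proof -
  have "absv 1 = absv 1 * absv 1" using av_mult[of 1 1] by simp
  moreover have "absv 1 \<noteq> 0" by simp
  ultimately show ?thesis by (metis mult_cancel_left1)
qed

lemma av_minus1[simp]: "absv (-1) = 1"
proof -
  have "absv (-1) * absv (-1) = 1" using av_mult[of "-1" "-1"] by simp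
  moreover have "absv (-1) \<ge> 0" by simp
  ultimately have "(absv (-1) - 1) * (absv (-1) + 1) = 0" by (simp add: algebra_simps)
  moreover have "absv (-1) + 1 \<noteq> 0" using \<open>absv (-1) \<ge> 0\<close> by linarith
  ultimately show ?thesis by simp
qed

lemma av_uminus[simp]: "absv (- x) = absv x"
  using av_mult[of "-1" x] by simp

lemma av_sym: "absv (x - y) = absv (y - x)"
  by (metis av_uminus minus_diff_eq)

lemma av_inverse: "absv (inverse x) = inverse (absv x)"
proof (cases "x = 0")
  case False
  then have "absv (inverse x) * absv x = 1" using av_mult[of "inverse x" x] by simp
  then show ?thesis using av_pos[OF False] by (simp add: field_simps del: av_eq0)
qed simp

lemma av_divide: "absv (x / y) = absv x / absv y"
  by (simp add: divide_inverse av_mult av_inverse)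

lemma av_power: "absv (x ^ n) = absv x ^ n"
  by (induction n) (simp_all add: av_mult)

lemma av_diff: "absv (x - y) \<le> max (absv x) (absv y)"
  using av_add[of x "-y"] by simp

lemma av_strict: assumes "absv y < absv x" shows "absv (x + y) = absv x"
proof -
  have "absv (x + y) \<le> absv x" using av_add[of x y] assms by simp
  moreover have "absv x \<le> max (absv (x + y)) (absv y)" using av_add[of "x+y" "-y"] by simp
  ultimately show ?thesis using assms by linarith
qed

lemma av_strict_diff: assumes "absv y < absv x" shows "absv (x - y) = absv x"
  using av_strict[of "-y" x] assms by simp

lemma av_of_nat: "absv (of_nat n) \<le> 1"
proof (induction n)
  case (Suc n) then show ?case using av_add[of "of_nat n" 1] by (simp add: add.commute)
qed simp

lemma av_sum: "finite A \<Longrightarrow> (\<And>i. i \<in> A \<Longrightarrow> absv (f i) \<le> c) \<Longrightarrow> c \<ge> 0 \<Longrightarrow> absv (sum f A) \<le> c"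
proof (induction A rule: finite_induct)
  case (insert x F)
  then have "absv (f x) \<le> c" "absv (sum f F) \<le> c" by auto
  then show ?case using av_add[of "f x" "sum f F"] by (simp add: insert(1,2))
qed simp

lemma av_root: assumes "n > 0" shows "\<exists>y. y ^ n = (x::'a)"
proof -
  have "degree (monom 1 n + [:-x:]) = n" using assms
    by (subst degree_add_eq_left) (simp_all add: degree_monom_eq)
  then obtain y where "poly (monom 1 n + [:-x:]) y = 0" using av_closed[of "monom 1 n + [:-x:]"] assms by auto
  then show ?thesis by (auto simp: poly_monom)
qed

lemma av_powi: "absv (x powi k) = absv x powi k"
  by (simp add: power_int_def av_power av_inverse power_inverse)

lemma ln_powi: "(\<rho>::real) > 0 \<Longrightarrow> ln (\<rho> powi k) = k * ln \<rho>"
  by (auto simp: power_int_def ln_realpow ln_inverse power_inverse)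

lemma av_value_group_dense:
  assumes "0 \<le> r" "r < B" "finite F"
  shows "\<exists>z. r < absv z \<and> absv z < B \<and> absv z \<notin> F"
proof -
  obtain c where c: "absv c \<noteq> 0" "absv c \<noteq> 1" using av_nontriv by blast
  define c' where "c' = (if absv c < 1 then inverse c else c)"
  have c'0: "c' \<noteq> 0" using c by (auto simp: c'_def)
  have c'1: "absv c' > 1" using c av_pos[of c]
    by (auto simp: c'_def av_inverse one_less_inverse)
  define L where "L = ln (absv c')"
  have L: "L > 0" using c'1 by (simp add: L_def)
  define r0 where "r0 = max r (B/2)"
  have r0: "0 < r0" "r0 < B" "r \<le> r0" using assms by (auto simp: r0_def)
  define a where "a = ln r0" define b where "b = ln B"
  have ab: "a < b" using r0 by (simp add: a_def b_def)
  define n where "n = card F"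
  obtain m :: nat where mm: "real m > L * (n + 2) / (b - a)" using reals_Archimedean2 by blast
  have "L * (n + 2) / (b - a) > 0" using L ab by simp
  then have m0: "m > 0" using mm by (auto intro!: Nat.gr0I)
  have mL: "(n + 2) * (L / m) < b - a" using mm m0 ab L by (simp add: field_simps)
  obtain w where w: "w ^ m = c'" using av_root m0 by blast
  have w0: "w \<noteq> 0" using w c'0 m0 by auto
  define \<rho> where "\<rho> = absv w"
  have rho0: "\<rho> > 0" using av_pos[OF w0] by (simp add: \<rho>_def)
  have lw: "ln \<rho> = L / m"
  proof -
    have "absv w ^ m = absv c'" using w av_power by metis
    then have "ln (absv w ^ m) = L" by (simp add: L_def)
    then have "m * ln (absv w) = L" using av_pos[OF w0] by (simp add: ln_realpow)
    then show ?thesis using m0 by (simp add: field_simps \<rho>_def)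
  qed
  have lwpos: "ln \<rho> > 0" using lw L m0 by simp
  define k0 where "k0 = \<lfloor>a / ln \<rho>\<rfloor> + 1"
  have k0: "a < k0 * ln \<rho>" "k0 * ln \<rho> \<le> a + ln \<rho>"
  proof -
    have "a / ln \<rho> < k0" "k0 \<le> a / ln \<rho> + 1" unfolding k0_def by linarith+
    then show "a < k0 * ln \<rho>" "k0 * ln \<rho> \<le> a + ln \<rho>" using lwpos
      by (simp_all add: field_simps)
  qed
  define t where "t = (\<lambda>j::nat. \<rho> powi (k0 + int j))"
  have lt: "ln (t j) = (k0 + int j) * ln \<rho>" for j
    using rho0 by (simp add: t_def ln_powi)
  have tpos: "t j > 0" for j using rho0 by (simp add: t_def)
  have inI: "r0 < t j \<and> t j < B" if "j \<le> n" for j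
  proof -
    have e: "ln (t j) = k0 * ln \<rho> + j * ln \<rho>" by (simp add: lt distrib_right)
    have "0 \<le> real j * ln \<rho>" using lwpos by simp
    then have "a < ln (t j)" using k0 e by linarith
    moreover note e
    moreover have "(j + 1) * ln \<rho> < b - a"
    proof -
      have "(j + 1) * ln \<rho> \<le> (n + 2) * ln \<rho>" using that lwpos by (intro mult_right_mono) auto
      then show ?thesis using mL lw by simp
    qed
    ultimately have "a < ln (t j)" "ln (t j) < b" using k0 by (simp_all add: distrib_right)
    then have "ln r0 < ln (t j)" "ln (t j) < ln B" unfolding a_def b_def by auto
    then show ?thesis using tpos[of j] r0 by (simp add: ln_less_cancel_iff)
  qed
  have inj: "inj_on t {..n}"
  proof (rule inj_onI)
    fix i j assume "t i = t j"
    then have "ln (t i) = ln (t j)" by simp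
    then have "(k0 + int i) * ln \<rho> = (k0 + int j) * ln \<rho>" by (simp only: lt)
    then show "i = j" using lwpos by simp
  qed
  have "card (t ` {..n}) = n + 1" using card_image[OF inj] by simp
  then have "\<not> t ` {..n} \<subseteq> F" using card_mono[OF assms(3), of "t ` {..n}"] n_def by linarith
  then obtain j where j: "j \<le> n" "t j \<notin> F" by auto
  have "absv (w powi (k0 + int j)) = t j" by (simp add: av_powi t_def \<rho>_def)
  moreover have "r < t j" "t j < B" using inI[OF j(1)] r0(3) by linarith+
  ultimately show ?thesis using j(2) by (intro exI[of _ "w powi (k0 + int j)"]) simp
qed

end

context nf begin

lemma av_sum_strict: "finite A \<Longrightarrow> (\<And>i. i \<in> A \<Longrightarrow> absv (f i) < c) \<Longrightarrow> c > 0 \<Longrightarrow> absv (sum f A) < c"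
proof (induction A rule: finite_induct)
  case (insert x F)
  then have "absv (f x) < c" "absv (sum f F) < c" by auto
  then show ?case using av_add[of "f x" "sum f F"] by (simp add: insert(1,2))
qed simp

definition gauss :: "real \<Rightarrow> 'a poly \<Rightarrow> real" where
  "gauss r g = Max ((\<lambda>i. absv (coeff g i) * r ^ i) ` {..degree g})"

lemma gauss_attain: "\<exists>i\<le>degree g. gauss r g = absv (coeff g i) * r ^ i"
proof -
  have "gauss r g \<in> (\<lambda>i. absv (coeff g i) * r ^ i) ` {..degree g}"
    unfolding gauss_def by (rule Max_in) auto
  then show ?thesis by auto
qed

lemma gauss_ge_deg: "i \<le> degree g \<Longrightarrow> absv (coeff g i) * r ^ i \<le> gauss r g"
  unfolding gauss_def by (rule Max_ge) auto

lemma gauss_nonneg: "0 \<le> r \<Longrightarrow> 0 \<le> gauss r g"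
proof -
  have "absv (coeff g 0) \<le> gauss r g" using gauss_ge_deg[of 0 g r] by simp
  then show ?thesis using av_nonneg[of "coeff g 0"] by linarith
qed

lemma gauss_ge: "0 \<le> r \<Longrightarrow> absv (coeff g i) * r ^ i \<le> gauss r g"
  by (cases "i \<le> degree g") (auto simp: gauss_ge_deg gauss_nonneg coeff_eq_0)

lemma gauss_le: "(\<And>i. absv (coeff g i) * r ^ i \<le> c) \<Longrightarrow> gauss r g \<le> c"
  using gauss_attain[of g r] by auto

lemma gauss_le_iff: "0 \<le> r \<Longrightarrow> gauss r g \<le> c \<longleftrightarrow> (\<forall>i. absv (coeff g i) * r ^ i \<le> c)"
  using gauss_le gauss_ge by (meson order_trans)

lemma gauss_0[simp]: "gauss r 0 = 0"
  by (simp add: gauss_def)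

lemma gauss_const[simp]: "gauss r [:c:] = absv c"
  by (simp add: gauss_def)

lemma gauss_coeff0: "0 \<le> r \<Longrightarrow> absv (poly f 0) \<le> gauss r f"
  using gauss_ge[of r f 0] by (simp add: poly_0_coeff_0)

lemma gauss_add: assumes "0 \<le> r" shows "gauss r (f + g) \<le> max (gauss r f) (gauss r g)"
proof (rule gauss_le)
  fix i
  have "absv (coeff (f + g) i) * r ^ i \<le> max (absv (coeff f i)) (absv (coeff g i)) * r ^ i"
    using av_add[of "coeff f i" "coeff g i"] assms by (simp add: mult_right_mono)
  also have "\<dots> \<le> max (gauss r f) (gauss r g)"
    using gauss_ge[OF assms, of f i] gauss_ge[OF assms, of g i] by (simp add: max_mult_distrib_right assms max_def)
  finally show "absv (coeff (f + g) i) * r ^ i \<le> max (gauss r f) (gauss r g)" .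
qed

lemma gauss_uminus[simp]: "gauss r (- f) = gauss r f"
  by (simp add: gauss_def)

lemma gauss_diff: assumes "0 \<le> r" shows "gauss r (f - g) \<le> max (gauss r f) (gauss r g)"
  using gauss_add[OF assms, of f "-g"] by simp

lemma gauss_smult: assumes "0 \<le> r" shows "gauss r (smult c f) = absv c * gauss r f"
proof (rule antisym)
  show "gauss r (smult c f) \<le> absv c * gauss r f"
    by (rule gauss_le) (simp add: av_mult mult.assoc mult_left_mono gauss_ge[OF assms])
  obtain i where "gauss r f = absv (coeff f i) * r ^ i" using gauss_attain by blast
  then show "absv c * gauss r f \<le> gauss r (smult c f)"
    using gauss_ge[OF assms, of "smult c f" i] by (simp add: av_mult mult.assoc)
qed

lemma gauss_mono: assumes "0 \<le> r" "r \<le> s" shows "gauss r f \<le> gauss s f"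
proof (rule gauss_le)
  fix i
  have "absv (coeff f i) * r ^ i \<le> absv (coeff f i) * s ^ i"
    using assms by (intro mult_left_mono power_mono) auto
  then show "absv (coeff f i) * r ^ i \<le> gauss s f" using gauss_ge[of s f i] assms by linarith
qed

lemma gauss_zero_iff: assumes "0 < r" shows "gauss r f = 0 \<longleftrightarrow> f = 0"
proof
  assume "gauss r f = 0"
  then have "absv (coeff f i) * r ^ i \<le> 0" for i using gauss_ge[of r f i] assms by simp
  then have "coeff f i = 0" for i using assms
    by (metis av_pos mult_le_0_iff not_le zero_less_power)
  then show "f = 0" by (simp add: poly_eqI)
qed simp

lemma gauss_lin: assumes "0 \<le> r" shows "gauss r [:-a, 1:] = max (absv a) r"
proof (rule antisym)
  show "gauss r [:-a, 1:] \<le> max (absv a) r"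
    by (rule gauss_le) (auto simp: coeff_pCons assms max.coboundedI2 split: nat.splits)
  show "max (absv a) r \<le> gauss r [:-a, 1:]"
    using gauss_ge[OF assms, of "[:-a,1:]" 0] gauss_ge[OF assms, of "[:-a,1:]" 1] by (simp add: max_def)
qed

lemma gauss_mult_le: assumes "0 \<le> r" shows "gauss r (f * g) \<le> gauss r f * gauss r g"
proof (rule gauss_le)
  fix n
  show "absv (coeff (f * g) n) * r ^ n \<le> gauss r f * gauss r g"
  proof (cases "r ^ n = 0")
    case True then show ?thesis using gauss_nonneg[OF assms, of f] gauss_nonneg[OF assms, of g] by (simp add: power_0_left)
  next
    case False
    then have rn: "r ^ n > 0" using assms by (simp add: order_neq_le_trans)
    have "absv (\<Sum>k\<le>n. coeff f k * coeff g (n - k)) \<le> gauss r f * gauss r g / r ^ n"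
    proof (rule av_sum)
      fix k assume k: "k \<in> {..n}"
      have X: "absv (coeff f k) * r ^ k * (absv (coeff g (n - k)) * r ^ (n - k)) \<le> gauss r f * gauss r g"
        using gauss_ge[OF assms] gauss_nonneg[OF assms] by (intro mult_mono) (auto simp: assms)
      have rk: "r ^ k * r ^ (n - k) = r ^ n" using k by (simp add: power_add[symmetric])
      have "absv (coeff f k * coeff g (n - k)) * r ^ n \<le> gauss r f * gauss r g"
        using X by (subst rk[symmetric]) (simp add: av_mult ac_simps)
      then show "absv (coeff f k * coeff g (n - k)) \<le> gauss r f * gauss r g / r ^ n"
        using rn by (simp add: pos_le_divide_eq)
    qed (use gauss_nonneg[OF assms] rn in auto)
    then show ?thesis using rn by (simp add: coeff_mult field_simps)
  qed
qed

lemma gauss_mult: assumes "0 \<le> r" shows "gauss r (f * g) = gauss r f * gauss r g"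
proof (cases "f = 0 \<or> g = 0")
  case True then show ?thesis by auto
next
  case False
  then have f0: "f \<noteq> 0" and g0: "g \<noteq> 0" by auto
  show ?thesis
  proof (cases "r = 0")
    case True
    have gz: "gauss 0 h = absv (coeff h 0)" for h :: "'a poly"
    proof (rule antisym)
      show "gauss 0 h \<le> absv (coeff h 0)"
        by (rule gauss_le) (case_tac i; simp)
      show "absv (coeff h 0) \<le> gauss 0 h" using gauss_ge[of 0 h 0] by simp
    qed
    show ?thesis using True by (simp add: gz coeff_mult av_mult)
  next
    case False
    then have r0: "r > 0" using assms by simp
    define A where "A = gauss r f" define B where "B = gauss r g"
    have A0: "A > 0" using gauss_zero_iff[OF r0] gauss_nonneg[OF assms] f0 unfolding A_def
      by (metis order_neq_le_trans)
    have B0: "B > 0" using gauss_zero_iff[OF r0] gauss_nonneg[OF assms] g0 unfolding B_def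
      by (metis order_neq_le_trans)
    define i0 where "i0 = (LEAST i. absv (coeff f i) * r ^ i = A)"
    define j0 where "j0 = (LEAST i. absv (coeff g i) * r ^ i = B)"
    have ex1: "\<exists>i. absv (coeff f i) * r ^ i = A" using gauss_attain[of f r] unfolding A_def by metis
    have ex2: "\<exists>i. absv (coeff g i) * r ^ i = B" using gauss_attain[of g r] unfolding B_def by metis
    have i0: "absv (coeff f i0) * r ^ i0 = A" unfolding i0_def by (rule LeastI_ex[OF ex1])
    have j0: "absv (coeff g j0) * r ^ j0 = B" unfolding j0_def by (rule LeastI_ex[OF ex2])
    have lti: "absv (coeff f k) * r ^ k < A" if "k < i0" for k
    proof -
      have "absv (coeff f k) * r ^ k \<noteq> A" using not_less_Least[OF that[unfolded i0_def]] by blast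
      then show ?thesis using gauss_ge[OF assms, of f k] unfolding A_def by linarith
    qed
    have ltj: "absv (coeff g k) * r ^ k < B" if "k < j0" for k
    proof -
      have "absv (coeff g k) * r ^ k \<noteq> B" using not_less_Least[OF that[unfolded j0_def]] by blast
      then show ?thesis using gauss_ge[OF assms, of g k] unfolding B_def by linarith
    qed
    define n where "n = i0 + j0"
    have rn: "r ^ n > 0" using r0 by simp
    define h where "h = (\<lambda>k. coeff f k * coeff g (n - k))"
    have main: "absv (h i0) = A * B / r ^ n"
      using i0 j0 r0 by (simp add: h_def n_def av_mult field_simps power_add)
    have rest: "absv (sum h ({..n} - {i0})) < A * B / r ^ n"
    proof (rule av_sum_strict)
      fix k assume k: "k \<in> {..n} - {i0}"
      then have kn: "k \<le> n" and ki: "k \<noteq> i0" by auto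
      have rk: "r ^ k * r ^ (n - k) = r ^ n" using kn by (simp add: power_add[symmetric])
      have "absv (coeff f k) * r ^ k * (absv (coeff g (n - k)) * r ^ (n - k)) < A * B"
      proof (cases "k < i0")
        case True
        have a0: "0 \<le> absv (coeff f k) * r ^ k" using assms by simp
        have "absv (coeff f k) * r ^ k * (absv (coeff g (n - k)) * r ^ (n - k)) \<le> absv (coeff f k) * r ^ k * B"
          using gauss_ge[OF assms, of g "n-k"] a0 unfolding B_def by (rule mult_left_mono)
        also have "\<dots> < A * B" using lti[OF True] B0 by (rule mult_strict_right_mono)
        finally show ?thesis .
      next
        case False
        then have "n - k < j0" using ki kn unfolding n_def by linarith
        then have lt: "absv (coeff g (n - k)) * r ^ (n - k) < B" by (rule ltj)
        have b0: "0 \<le> absv (coeff g (n - k)) * r ^ (n - k)" using assms by simp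
        have "absv (coeff f k) * r ^ k * (absv (coeff g (n - k)) * r ^ (n - k)) \<le> A * (absv (coeff g (n - k)) * r ^ (n - k))"
          using gauss_ge[OF assms, of f k] b0 unfolding A_def by (rule mult_right_mono)
        also have "\<dots> < A * B" using lt A0 by (rule mult_strict_left_mono)
        finally show ?thesis .
      qed
      then have "absv (h k) * r ^ n < A * B"
        by (subst rk[symmetric]) (simp add: h_def av_mult ac_simps)
      then show "absv (h k) < A * B / r ^ n" using rn by (simp add: pos_less_divide_eq)
    qed (use A0 B0 rn in auto)
    have "coeff (f * g) n = h i0 + sum h ({..n} - {i0})"
      unfolding coeff_mult h_def[symmetric] by (subst sum.remove[of _ i0]) (auto simp: n_def)
    then have "absv (coeff (f * g) n) = A * B / r ^ n"
      using av_strict[of "sum h ({..n} - {i0})" "h i0"] main rest by simp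
    then have "A * B \<le> gauss r (f * g)" using gauss_ge[OF assms, of "f*g" n] rn r0 by simp
    then show ?thesis using gauss_mult_le[OF assms, of f g] unfolding A_def B_def by linarith
  qed
qed

end

context nf begin

lemma lin_induct:
  fixes f :: "'a poly"
  assumes C: "\<And>c. P [:c:]" and S: "\<And>a g. P g \<Longrightarrow> P ([:-a, 1:] * g)"
  shows "P f"
proof (induction "degree f" arbitrary: f rule: less_induct)
  case less
  show ?case
  proof (cases "degree f = 0")
    case True then show ?thesis using C by (metis degree_eq_zeroE)
  next
    case False
    then obtain a where a: "poly f a = 0" using av_closed[of f] by auto
    then obtain g where g: "f = [:-a, 1:] * g" using poly_eq_0_iff_dvd by (metis dvdE)
    have "f \<noteq> 0" using False by auto
    then have "g \<noteq> 0" using g by auto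
    have d: "degree ([:-a, 1:] * g) = degree [:-a, 1:] + degree g"
      by (rule degree_mult_eq) (use \<open>g \<noteq> 0\<close> in auto)
    then have "degree f = Suc (degree g)" using g by simp
    then have "degree g < degree f" by simp
    then show ?thesis using less g S by metis
  qed
qed

lemma zeta_gauss: "zeta absv a r f = gauss r (f \<circ>\<^sub>p [:a, 1:])"
  by (simp add: zeta_def gauss_def degree_pcompose)

lemma zeta_mult: "0 \<le> r \<Longrightarrow> zeta absv a r (f * g) = zeta absv a r f * zeta absv a r g"
  by (simp add: zeta_gauss pcompose_mult gauss_mult)

lemma zeta_add: "0 \<le> r \<Longrightarrow> zeta absv a r (f + g) \<le> max (zeta absv a r f) (zeta absv a r g)"
  by (simp add: zeta_gauss pcompose_add gauss_add)

lemma zeta_const[simp]: "zeta absv a r [:c:] = absv c"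
  by (simp add: zeta_gauss)

lemma zeta_nonneg: "0 \<le> r \<Longrightarrow> 0 \<le> zeta absv a r f"
  by (simp add: zeta_gauss gauss_nonneg)

lemma zeta_lin: assumes "0 \<le> r" shows "zeta absv a r [:-c, 1:] = max (absv (a - c)) r"
proof -
  have "[:-c, 1:] \<circ>\<^sub>p [:a, 1:] = [:-(c - a), 1:]" by (simp add: pcompose_pCons)
  then show ?thesis using gauss_lin[OF assms, of "c - a"] by (simp add: zeta_gauss av_sym)
qed

lemma zeta_ge_typeI: assumes "0 \<le> r" shows "absv (poly f a) \<le> zeta absv a r f"
  using gauss_coeff0[OF assms, of "f \<circ>\<^sub>p [:a,1:]"] by (simp add: zeta_gauss poly_pcompose)

lemma zeta_mono: "0 \<le> r \<Longrightarrow> r \<le> s \<Longrightarrow> zeta absv a r f \<le> zeta absv a s f"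
  by (simp add: zeta_gauss gauss_mono)

lemma max_le_add: "0 \<le> (a::real) \<Longrightarrow> 0 \<le> b \<Longrightarrow> max a b \<le> a + b" by auto

lemma zeta_berk: assumes "0 \<le> r" shows "is_berk_aff absv (zeta absv a r)"
  unfolding is_berk_aff_def
proof (intro conjI allI)
  fix f g :: "'a poly"
  show "zeta absv a r (f + g) \<le> zeta absv a r f + zeta absv a r g"
    using zeta_add[OF assms, where a=a and f=f and g=g] zeta_nonneg[OF assms, where a=a and f=f] zeta_nonneg[OF assms, where a=a and f=g]
      max_le_add[of "zeta absv a r f" "zeta absv a r g"] by linarith
qed (auto simp: zeta_nonneg zeta_mult assms)

lemma av_tri: "absv (x + y) \<le> absv x + absv y"
proof -
  have "absv (x + y) \<le> max (absv x) (absv y)" by (rule av_add)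
  moreover have "max (absv x) (absv y) \<le> absv x + absv y"
    using av_nonneg[of x] av_nonneg[of y] by (simp only: max_def) (auto simp del: av_nonneg)
  ultimately show ?thesis by linarith
qed

lemma typeI_berk: "is_berk_aff absv (typeI absv a)"
  unfolding is_berk_aff_def typeI_def
proof (intro conjI allI)
  fix f g :: "'a poly"
  show "absv (poly (f + g) a) \<le> absv (poly f a) + absv (poly g a)"
    using av_tri[of "poly f a" "poly g a"] by simp
qed (auto simp: av_mult)

lemma zeta_zero_typeI: "zeta absv a 0 = typeI absv a"
proof
  fix f
  have "zeta absv a 0 f \<le> absv (poly f a)"
    unfolding zeta_gauss by (rule gauss_le) (case_tac i, simp_all add: poly_0_coeff_0[symmetric] poly_pcompose)
  then show "zeta absv a 0 f = typeI absv a f"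
    using zeta_ge_typeI[of 0 f a] by (simp add: typeI_def)
qed

section \<open>General Berkovich points\<close>

lemma bk_nonneg: "is_berk_aff absv N \<Longrightarrow> N f \<ge> 0" unfolding is_berk_aff_def by blast
lemma bk_mult: "is_berk_aff absv N \<Longrightarrow> N (f * g) = N f * N g" unfolding is_berk_aff_def by blast
lemma bk_tri: "is_berk_aff absv N \<Longrightarrow> N (f + g) \<le> N f + N g" unfolding is_berk_aff_def by blast
lemma bk_const: "is_berk_aff absv N \<Longrightarrow> N [:c:] = absv c" unfolding is_berk_aff_def by blast

lemma bk_0: "is_berk_aff absv N \<Longrightarrow> N 0 = 0" using bk_const[of N 0] by simp
lemma bk_1: "is_berk_aff absv N \<Longrightarrow> N 1 = 1" using bk_const[of N 1] by (simp add: one_pCons)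
lemma bk_smult: "is_berk_aff absv N \<Longrightarrow> N (smult c f) = absv c * N f"
  using bk_mult[of N "[:c:]" f] bk_const[of N c] by simp
lemma bk_uminus: "is_berk_aff absv N \<Longrightarrow> N (- f) = N f"
  using bk_smult[of N "-1" f] by simp
lemma bk_power: "is_berk_aff absv N \<Longrightarrow> N (f ^ n) = N f ^ n"
  by (induction n) (simp_all add: bk_1 bk_mult)

lemma bk_sum: assumes N: "is_berk_aff absv N" shows "finite A \<Longrightarrow> N (sum f A) \<le> (\<Sum>i\<in>A. N (f i))"
proof (induction A rule: finite_induct)
  case empty then show ?case by (simp add: bk_0[OF N])
next
  case (insert x F)
  then show ?case using bk_tri[OF N, of "f x" "sum f F"] by simp
qed

lemma bk_nonarch: assumes N: "is_berk_aff absv N" shows "N (f + g) \<le> max (N f) (N g)"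
proof -
  define x where "x = N (f + g)"
  define M where "M = max (N f) (N g)"
  have M0: "M \<ge> 0" using bk_nonneg[OF N] by (simp add: M_def le_max_iff_disj)
  have x0: "x \<ge> 0" using bk_nonneg[OF N] by (simp add: x_def)
  have bound: "x ^ n \<le> real (n + 1) * M ^ n" for n
  proof -
    have "x ^ n = N ((f + g) ^ n)" by (simp add: x_def bk_power[OF N])
    also have "\<dots> = N (\<Sum>k\<le>n. of_nat (n choose k) * f ^ k * g ^ (n - k))" by (simp add: binomial_ring)
    also have "\<dots> \<le> (\<Sum>k\<le>n. N (of_nat (n choose k) * f ^ k * g ^ (n - k)))" by (rule bk_sum[OF N]) simp
    also have "\<dots> \<le> (\<Sum>k\<le>n. M ^ n)"
    proof (rule sum_mono)
      fix k assume k: "k \<in> {..n}"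
      have "N (of_nat (n choose k) * f ^ k * g ^ (n - k)) = absv (of_nat (n choose k)) * (N f ^ k * N g ^ (n - k))"
        by (simp add: bk_mult[OF N] bk_power[OF N] of_nat_poly bk_smult[OF N])
      also have "\<dots> \<le> 1 * (M ^ k * M ^ (n - k))"
        using bk_nonneg[OF N] av_of_nat M0
        by (intro mult_mono power_mono) (auto simp: M_def)
      also have "\<dots> = M ^ n" using k by (simp add: power_add[symmetric])
      finally show "N (of_nat (n choose k) * f ^ k * g ^ (n - k)) \<le> M ^ n" .
    qed
    also have "\<dots> = (n + 1) * M ^ n" by simp
    finally show ?thesis .
  qed
  show ?thesis
  proof (rule ccontr)
    assume "\<not> N (f + g) \<le> max (N f) (N g)"
    then have xM: "x > M" unfolding x_def M_def by linarith
    show False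
    proof (cases "M = 0")
      case True
      then show False using bound[of 1] xM by simp
    next
      case False
      then have Mp: "M > 0" using M0 by simp
      define y where "y = x / M - 1"
      have y0: "y > 0" using xM Mp by (simp add: y_def field_simps)
      obtain n :: nat where n: "real n * y ^ 2 > 3" "n \<ge> 1"
      proof -
        obtain m :: nat where "real m > 3 / y ^ 2" using reals_Archimedean2 by blast
        then have "real (m + 1) * y ^ 2 > 3" using y0 by (simp add: field_simps) (smt (verit) mult_nonneg_nonneg of_nat_0_le_iff zero_le_power2)
        then show ?thesis using that[of "m+1"] by simp
      qed
      have "1 + real n * y \<le> (1 + y) ^ n" using Bernoulli_inequality[of y n] y0 by simp
      then have "(real n * y) ^ 2 \<le> ((1 + y) ^ n) ^ 2" using y0 by (intro power_mono) auto
      moreover have "((1 + y) ^ n) ^ 2 = (1 + y) ^ (2 * n)" by (simp add: power_mult[symmetric] mult.commute)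
      moreover have "(real n * y) ^ 2 = real n * (real n * y ^ 2)" by (simp add: power2_eq_square)
      ultimately have A: "real n * (real n * y ^ 2) \<le> (1 + y) ^ (2 * n)" by simp
      have "(1 + y) ^ (2 * n) = (x / M) ^ (2 * n)" by (simp add: y_def)
      also have "\<dots> = x ^ (2 * n) / M ^ (2 * n)" by (simp add: power_divide)
      also have "\<dots> \<le> real (2 * n + 1)" using bound[of "2*n"] Mp by (simp add: divide_le_eq)
      finally have "real n * (real n * y ^ 2) \<le> 2 * real n + 1" using A by simp
      moreover have "real n * (real n * y ^ 2) > real n * 3" using n by (intro mult_strict_left_mono) auto
      moreover have "real n \<ge> 1" using n by simp
      ultimately show False by linarith
    qed
  qed
qed

lemma bk_nonarch_diff: "is_berk_aff absv N \<Longrightarrow> N (f - g) \<le> max (N f) (N g)"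
  using bk_nonarch[of N f "-g"] bk_uminus[of N g] by simp

lemma bk_strict: assumes N: "is_berk_aff absv N" and lt: "N g < N f" shows "N (f + g) = N f"
proof -
  have "N (f + g) \<le> N f" using bk_nonarch[OF N, of f g] lt by simp
  moreover have "N f \<le> max (N (f + g)) (N g)" using bk_nonarch[OF N, of "f + g" "- g"] bk_uminus[OF N, of g] by simp
  ultimately show ?thesis using lt by linarith
qed

lemma bk_kernel_lin: assumes N: "is_berk_aff absv N" and z: "N [:-a, 1:] = 0" shows "N = typeI absv a"
proof
  fix f
  obtain h where h: "f = [:poly f a:] + [:-a, 1:] * h"
  proof -
    have "[:-a, 1:] dvd f - [:poly f a:]" by (simp add: poly_eq_0_iff_dvd[symmetric])
    then obtain h where "f - [:poly f a:] = [:-a, 1:] * h" by (elim dvdE)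
    then show ?thesis using that[of h] by (simp add: algebra_simps)
  qed
  have "N ([:-a, 1:] * h) = 0" using z by (simp only: bk_mult[OF N] mult_zero_left)
  then have e: "N f = N [:poly f a:]"
    using bk_nonarch[OF N, of "[:poly f a:]" "[:-a,1:]*h"] bk_nonarch[OF N, of f "- ([:-a,1:]*h)"]
      bk_uminus[OF N] bk_nonneg[OF N] h
    by (smt (verit) add_diff_cancel_right' diff_conv_add_uminus max_def)
  then show "N f = typeI absv a f" by (simp add: typeI_def bk_const[OF N])
qed

lemma bk_kernel: assumes N: "is_berk_aff absv N" and Q0: "Q \<noteq> 0" and z: "N Q = 0"
  shows "\<exists>a. poly Q a = 0 \<and> N = typeI absv a"
proof -
  have "\<forall>Q. Q \<noteq> 0 \<longrightarrow> N Q = 0 \<longrightarrow> (\<exists>a. poly Q a = 0 \<and> N = typeI absv a)" (is "\<forall>Q. ?P Q")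
  proof
    fix Q :: "'a poly"
    show "?P Q"
    proof (induction Q rule: lin_induct)
      case (1 c) then show ?case by (simp add: bk_const[OF N])
    next
      case (2 a g)
      show ?case
      proof (intro impI)
        assume ne: "[:- a, 1:] * g \<noteq> 0" and z: "N ([:- a, 1:] * g) = 0"
        then have "N [:-a, 1:] = 0 \<or> N g = 0" by (simp only: bk_mult[OF N] mult_eq_0_iff)
        then show "\<exists>b. poly ([:- a, 1:] * g) b = 0 \<and> N = typeI absv b"
        proof
          assume "N [:-a, 1:] = 0" then show ?thesis using bk_kernel_lin[OF N] by auto
        next
          assume "N g = 0" then show ?thesis using 2 ne by auto
        qed
      qed
    qed
  qed
  then show ?thesis using Q0 z by blast
qed

lemma mult_agree:
  fixes N1 N2 :: "'a poly \<Rightarrow> real"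
  assumes M1: "\<And>f g. N1 (f * g) = N1 f * N1 g" and M2: "\<And>f g. N2 (f * g) = N2 f * N2 g"
    and C: "\<And>c. N1 [:c:] = N2 [:c:]" and L: "\<And>a. N1 [:-a, 1:] = N2 [:-a, 1:]"
  shows "N1 = N2"
proof
  fix f show "N1 f = N2 f"
    by (induction f rule: lin_induct) (simp_all only: M1 M2 C L)
qed

lemma above_typeI_zeta:
  assumes N: "is_berk_aff absv N" and ge: "\<And>f. absv (poly f b) \<le> N f"
  shows "N = zeta absv b (N [:-b, 1:])"
proof -
  define t where "t = N [:-b, 1:]"
  have t0: "t \<ge> 0" using bk_nonneg[OF N] by (simp add: t_def)
  have lin: "N [:-c, 1:] = max (absv (b - c)) t" for c
  proof -
    have e: "[:-c, 1:] = [:-b, 1:] + [:b - c:]" by simp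
    have up: "N [:-c, 1:] \<le> max t (absv (b - c))"
      using bk_nonarch[OF N, of "[:-b,1:]" "[:b - c:]"] by (simp add: t_def bk_const[OF N])
    have lo1: "absv (b - c) \<le> N [:-c, 1:]" using ge[of "[:-c,1:]"] by simp
    have "t \<le> max (N [:-c, 1:]) (absv (b - c))"
      using bk_nonarch[OF N, of "[:-c,1:]" "[:c - b:]"] by (simp add: t_def bk_const[OF N] av_sym)
    then show ?thesis using up lo1 by (auto simp: max_def split: if_splits)
  qed
  show ?thesis unfolding t_def[symmetric]
    by (rule mult_agree) (simp_all add: bk_mult[OF N] zeta_mult[OF t0] bk_const[OF N] zeta_lin[OF t0] lin max.commute)
qed

lemma rad_zeta: assumes "0 \<le> r" shows "rad (zeta absv b r) = r"
  unfolding rad_def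
proof (rule cInf_eq_minimum)
  show "r \<in> range (\<lambda>a. zeta absv b r [:- a, 1:])"
    using zeta_lin[OF assms, of b b] assms by (auto intro!: image_eqI[of _ _ b])
  fix x assume "x \<in> range (\<lambda>a. zeta absv b r [:- a, 1:])"
  then show "r \<le> x" using zeta_lin[OF assms] by auto
qed

end

section \<open>Homogenised substitution\<close>

definition H :: "'a::field poly \<Rightarrow> 'a poly \<Rightarrow> nat \<Rightarrow> 'a poly \<Rightarrow> 'a poly" where
  "H P Q n f = (\<Sum>i\<le>n. smult (coeff f i) (P ^ i * Q ^ (n - i)))"

lemma H_deg: "subst_rat P Q f = H P Q (degree f) f"
  by (simp add: subst_rat_def H_def)

lemma H_pad: assumes "degree f \<le> n" shows "H P Q n f = subst_rat P Q f * Q ^ (n - degree f)"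
proof -
  have "H P Q n f = (\<Sum>i\<le>degree f. smult (coeff f i) (P ^ i * Q ^ (n - i)))"
    unfolding H_def using assms
    by (intro sum.mono_neutral_right) (auto simp: coeff_eq_0)
  also have "\<dots> = (\<Sum>i\<le>degree f. smult (coeff f i) (P ^ i * Q ^ (degree f - i)) * Q ^ (n - degree f))"
  proof (intro sum.cong refl)
    fix i assume "i \<in> {..degree f}"
    then have "Q ^ (n - i) = Q ^ (degree f - i) * Q ^ (n - degree f)"
      using assms by (simp add: power_add[symmetric])
    then show "smult (coeff f i) (P ^ i * Q ^ (n - i)) = smult (coeff f i) (P ^ i * Q ^ (degree f - i)) * Q ^ (n - degree f)"
      by (simp add: mult.assoc)
  qed
  also have "\<dots> = subst_rat P Q f * Q ^ (n - degree f)"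
    by (simp add: subst_rat_def sum_distrib_right)
  finally show ?thesis .
qed

lemma H_add: "H P Q n (f + g) = H P Q n f + H P Q n g"
  by (simp add: H_def smult_add_left sum.distrib)

lemma smult_sum_right: "smult c (sum f A) = (\<Sum>i\<in>A. smult c (f i))"
  by (induction A rule: infinite_finite_induct) (simp_all add: smult_add_right)

lemma H_smult: "H P Q n (smult c f) = smult c (H P Q n f)"
  by (simp add: H_def smult_sum_right)

lemma H_diff: "H P Q n (f - g) = H P Q n f - H P Q n g"
  by (simp add: H_def smult_diff_left sum_subtractf)

lemma H_const: "H P Q n [:c:] = smult c (Q ^ n)"
proof -
  have "H P Q n [:c:] = (\<Sum>i\<in>{0}. smult (coeff [:c:] i) (P ^ i * Q ^ (n - i)))"
    unfolding H_def by (intro sum.mono_neutral_right) (auto simp: coeff_pCons split: nat.splits)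
  then show ?thesis by simp
qed

lemma H_shift: "H P Q (Suc k) (pCons 0 h) = P * H P Q k h"
  unfolding H_def by (subst sum.atMost_Suc_shift) (simp add: sum_distrib_left mult_ac)

lemma H_Suc: assumes "degree h \<le> k" shows "H P Q (Suc k) h = Q * H P Q k h"
proof -
  have "degree h \<le> Suc k" using assms by simp
  then show ?thesis using H_pad[OF assms] H_pad[of h "Suc k"] assms
    by (simp add: Suc_diff_le mult_ac)
qed

lemma H_lin: assumes "degree h \<le> k"
  shows "H P Q (Suc k) ([:-a, 1:] * h) = (P - smult a Q) * H P Q k h"
proof -
  have "[:-a, 1:] * h = pCons 0 h - smult a h" by simp
  then show ?thesis using H_shift[of P Q k h] H_Suc[OF assms, of P Q]
    by (simp add: H_diff H_smult algebra_simps)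
qed

lemma degree_lin_mult: fixes g :: "'a::field poly" shows "g \<noteq> 0 \<Longrightarrow> degree ([:-a, 1:] * g) = Suc (degree g)"
proof -
  assume "g \<noteq> 0"
  then have "degree ([:-a, 1:] * g) = degree [:-a, 1:] + degree g" by (intro degree_mult_eq) auto
  then show ?thesis by simp
qed

lemma (in nf) H_mult: fixes f P Q :: "'a poly" shows "\<forall>m n g. degree f \<le> m \<longrightarrow> degree g \<le> n \<longrightarrow> H P Q (m + n) (f * g) = H P Q m f * H P Q n g"
proof (induction f rule: lin_induct)
  case (1 c)
  show ?case
  proof (intro allI impI)
    fix m n g assume "degree [:c:] \<le> m" "degree (g::'a poly) \<le> n"
    have mn: "m + n - degree g = m + (n - degree g)" using \<open>degree g \<le> n\<close> by simp
    have dg: "degree g \<le> m + n" using \<open>degree g \<le> n\<close> by simp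
    have "H P Q (m + n) g = subst_rat P Q g * Q ^ (m + (n - degree g))"
      using H_pad[OF dg, of P Q] by (simp only: mn)
    also have "\<dots> = (subst_rat P Q g * Q ^ (n - degree g)) * Q ^ m"
      by (simp only: power_add mult_ac)
    also have "\<dots> = H P Q n g * Q ^ m" using H_pad[OF \<open>degree g \<le> n\<close>, of P Q] by simp
    finally have "H P Q (m + n) g = H P Q n g * Q ^ m" .
    then show "H P Q (m + n) ([:c:] * g) = H P Q m [:c:] * H P Q n g"
      by (simp add: H_smult H_const mult_ac)
  qed
next
  case (2 a f)
  show ?case
  proof (intro allI impI)
    fix m n g assume dm: "degree ([:-a, 1:] * f) \<le> m" and dn: "degree (g::'a poly) \<le> n"
    show "H P Q (m + n) ([:-a, 1:] * f * g) = H P Q m ([:-a, 1:] * f) * H P Q n g"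
    proof (cases "f = 0")
      case True
      then show ?thesis by (simp add: H_def)
    next
      case False
      then have df: "degree ([:-a, 1:] * f) = Suc (degree f)" by (rule degree_lin_mult)
      then obtain m' where m': "m = Suc m'" "degree f \<le> m'" using dm by (cases m) auto
      have dfg: "degree (f * g) \<le> m' + n"
        using m'(2) dn degree_mult_le[of f g] by linarith
      have "H P Q (m + n) ([:-a, 1:] * f * g) = H P Q (Suc (m' + n)) ([:-a, 1:] * (f * g))"
        by (simp only: m' mult.assoc add_Suc)
      also have "\<dots> = (P - smult a Q) * H P Q (m' + n) (f * g)" by (rule H_lin[OF dfg])
      also have "\<dots> = (P - smult a Q) * (H P Q m' f * H P Q n g)" using 2 m'(2) dn by simp
      also have "\<dots> = H P Q m ([:-a, 1:] * f) * H P Q n g"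
        using H_lin[OF m'(2), of P Q a] by (simp add: m' mult_ac)
      finally show ?thesis .
    qed
  qed
qed

lemma (in nf) subst_mult: fixes f g P Q :: "'a poly" shows "subst_rat P Q (f * g) = subst_rat P Q f * subst_rat P Q g"
proof (cases "f = 0 \<or> g = 0")
  case True then show ?thesis by (auto simp: subst_rat_def)
next
  case False
  then have "degree (f * g) = degree f + degree g" by (intro degree_mult_eq) auto
  then show ?thesis using H_mult[of f P Q] by (simp add: H_deg)
qed

lemma subst_const[simp]: "subst_rat P Q [:c:] = [:c:]"
  by (simp add: subst_rat_def)

lemma subst_X: "subst_rat P Q [:0, 1:] = P"
  by (simp add: subst_rat_def)

lemma subst_lin: "subst_rat P Q [:-a, 1:] = P - smult a Q"
  by (simp add: subst_rat_def)

context nf begin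

definition ratN :: "'a poly \<Rightarrow> 'a poly \<Rightarrow> 'a bsn \<Rightarrow> 'a bsn" where
  "ratN P Q N = (\<lambda>f. N (subst_rat P Q f) / N Q ^ degree f)"

lemma rat_berk_Some: "N Q \<noteq> 0 \<Longrightarrow> rat_berk absv P Q (Some N) = Some (ratN P Q N)"
  by (simp add: rat_berk_def ratN_def)

lemma ratN_berk: assumes N: "is_berk_aff absv N" and NQ: "N Q \<noteq> 0"
  shows "is_berk_aff absv (ratN P Q N)"
  unfolding is_berk_aff_def
proof (intro conjI allI)
  have q: "N Q > 0" using bk_nonneg[OF N, of Q] NQ by simp
  fix f g :: "'a poly"
  show "0 \<le> ratN P Q N f" unfolding ratN_def using bk_nonneg[OF N] q by simp
  show "ratN P Q N (f * g) = ratN P Q N f * ratN P Q N g"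
  proof (cases "f = 0 \<or> g = 0")
    case True then show ?thesis by (auto simp: ratN_def subst_rat_def bk_0[OF N])
  next
    case False
    then have "degree (f * g) = degree f + degree g" by (intro degree_mult_eq) auto
    then show ?thesis by (simp add: ratN_def subst_mult bk_mult[OF N] power_add)
  qed
  show "ratN P Q N [:c:] = absv c" for c by (simp add: ratN_def bk_const[OF N])
  define n where "n = max (degree f) (degree g)"
  have dfg: "degree (f + g) \<le> n" using degree_add_le_max[of f g] by (simp add: n_def)
  have df: "degree f \<le> n" and dg: "degree g \<le> n" by (simp_all add: n_def)
  have "N (subst_rat P Q (f + g)) * N Q ^ (n - degree (f + g)) = N (H P Q n (f + g))"
    by (simp add: H_pad[OF dfg] bk_mult[OF N] bk_power[OF N])
  also have "\<dots> \<le> N (H P Q n f) + N (H P Q n g)" by (simp add: H_add bk_tri[OF N])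
  also have "\<dots> = N (subst_rat P Q f) * N Q ^ (n - degree f) + N (subst_rat P Q g) * N Q ^ (n - degree g)"
    by (simp add: H_pad[OF df] H_pad[OF dg] bk_mult[OF N] bk_power[OF N])
  finally have X: "N (subst_rat P Q (f + g)) * N Q ^ (n - degree (f + g)) \<le>
     N (subst_rat P Q f) * N Q ^ (n - degree f) + N (subst_rat P Q g) * N Q ^ (n - degree g)" .
  have e: "N Q ^ n = N Q ^ (n - degree h) * N Q ^ degree h" if "degree h \<le> n" for h :: "'a poly"
    using that by (simp add: power_add[symmetric])
  have pad: "ratN P Q N h = N (subst_rat P Q h) * N Q ^ (n - degree h) / N Q ^ n" if "degree h \<le> n" for h
    using q by (simp add: ratN_def e[OF that])
  have "ratN P Q N (f + g) = N (subst_rat P Q (f + g)) * N Q ^ (n - degree (f + g)) / N Q ^ n"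
    by (rule pad[OF dfg])
  also have "\<dots> \<le> (N (subst_rat P Q f) * N Q ^ (n - degree f) + N (subst_rat P Q g) * N Q ^ (n - degree g)) / N Q ^ n"
    using X q by (simp add: divide_right_mono)
  also have "\<dots> = ratN P Q N f + ratN P Q N g"
    by (simp add: pad[OF df] pad[OF dg] add_divide_distrib)
  finally show "ratN P Q N (f + g) \<le> ratN P Q N f + ratN P Q N g" .
qed

lemma berk_Some: "is_berk_aff absv N \<Longrightarrow> Some N \<in> Berk absv"
  by (simp add: Berk_def)

lemma joinG_le:
  assumes X: "Some X \<in> Berk absv" and Y: "Some Y \<in> Berk absv"
    and cx: "X [:0, 1:] \<le> 1" and cy: "Y [:0, 1:] \<le> 1" and le: "\<And>f. X f \<le> Y f"
  shows "joinG absv (Some X) (Some Y) = Some Y" "joinG absv (Some Y) (Some X) = Some Y"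
proof -
  have icx: "in_cdisc (Some X)" and icy: "in_cdisc (Some Y)" using cx cy by (auto simp: in_cdisc_def)
  have p1: "on_path_G absv (Some X) (Some Y)" using icx icy le by (simp add: on_path_G_def berk_le_def)
  have p2: "on_path_G absv (Some Y) (Some Y)" using icy by (simp add: on_path_G_def berk_le_def)
  have uniq: "z = Some Y" if z: "z \<in> Berk absv" "on_path_G absv (Some Y) z"
       "\<forall>w\<in>Berk absv. on_path_G absv (Some X) w \<and> on_path_G absv (Some Y) w \<longrightarrow> on_path_G absv z w" for z
  proof -
    have zy: "on_path_G absv z (Some Y)" using z(3) Y p1 p2 by blast
    from z(2) icy have icz: "in_cdisc z" and yz: "berk_le (Some Y) z" by (auto simp: on_path_G_def)
    from zy icz have "berk_le z (Some Y)" by (simp add: on_path_G_def)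
    with yz show ?thesis by (auto simp: berk_le_def intro!: ext antisym)
  qed
  show "joinG absv (Some X) (Some Y) = Some Y"
    unfolding joinG_def
    by (rule the_equality) (use Y p1 p2 uniq in auto)
  show "joinG absv (Some Y) (Some X) = Some Y"
    unfolding joinG_def
    by (rule the_equality) (use Y p1 p2 uniq in auto)
qed

lemma pow_diff_le: assumes "0 \<le> r" "r \<le> (s::real)"
  shows "s ^ i - r ^ i \<le> real i * s ^ (i - 1) * (s - r)"
proof -
  have "s ^ i - r ^ i = (s - r) * (\<Sum>k<i. r ^ (i - Suc k) * s ^ k)" by (rule power_diff_sumr2)
  also have "\<dots> \<le> (s - r) * (\<Sum>k<i. s ^ (i - 1))"
  proof (intro mult_left_mono sum_mono)
    fix k assume k: "k \<in> {..<i}"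
    have "r ^ (i - Suc k) * s ^ k \<le> s ^ (i - Suc k) * s ^ k"
      using assms by (intro mult_right_mono power_mono) auto
    also have "\<dots> = s ^ (i - 1)" using k by (simp add: power_add[symmetric])
    finally show "r ^ (i - Suc k) * s ^ k \<le> s ^ (i - 1)" .
  qed (use assms in auto)
  also have "\<dots> = real i * s ^ (i - 1) * (s - r)" by simp
  finally show ?thesis .
qed

end

context nf begin

lemma zeta0: "zeta absv 0 r = gauss r"
  by (rule ext) (simp add: zeta_gauss)

lemma roots_lin_mult: fixes g :: "'a poly" shows "poly ([:-a, 1:] * g) b = 0 \<longleftrightarrow> b = a \<or> poly g b = 0"
proof -
  have "poly ([:-a, 1:] * g) b = (b - a) * poly g b" by (simp add: poly_mult del: mult_pCons_left)
  then show ?thesis by simp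
qed

lemma gauss_const_root:
  assumes r: "0 \<le> r" shows "(\<forall>b. poly F b = 0 \<longrightarrow> r \<le> absv b) \<longrightarrow> gauss r F = absv (poly F 0)"
proof (induction F rule: lin_induct)
  case (1 c) then show ?case by simp
next
  case (2 a g)
  show ?case
  proof
    assume h: "\<forall>b. poly ([:-a, 1:] * g) b = 0 \<longrightarrow> r \<le> absv b"
    then have "gauss r g = absv (poly g 0)" using 2 by (simp add: roots_lin_mult)
    moreover have "r \<le> absv a" using h[rule_format, of a] by simp
    ultimately show "gauss r ([:-a, 1:] * g) = absv (poly ([:-a, 1:] * g) 0)"
      by (simp add: gauss_mult[OF r] gauss_lin[OF r] av_mult max_def poly_mult del: mult_pCons_left)
  qed
qed

lemma val_const_root:
  shows "(\<forall>b. poly F b = 0 \<longrightarrow> absv z < absv b) \<longrightarrow> absv (poly F z) = absv (poly F 0)"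
proof (induction F rule: lin_induct)
  case (1 c) then show ?case by simp
next
  case (2 a g)
  show ?case
  proof
    assume h: "\<forall>b. poly ([:-a, 1:] * g) b = 0 \<longrightarrow> absv z < absv b"
    then have "absv (poly g z) = absv (poly g 0)" using 2 by (simp add: roots_lin_mult)
    moreover have "absv z < absv a" using h[rule_format, of a] by simp
    then have "absv (z - a) = absv a" using av_strict_diff[of z "a"] av_sym by (metis av_strict_diff av_uminus minus_diff_eq diff_minus_eq_add add.commute)
    ultimately show "absv (poly ([:-a, 1:] * g) z) = absv (poly ([:-a, 1:] * g) 0)"
      by (simp add: av_mult poly_mult del: mult_pCons_left)
  qed
qed

lemma max_modulus:
  shows "(\<forall>b. poly F b = 0 \<longrightarrow> absv b \<noteq> absv z) \<longrightarrow> absv (poly F z) = gauss (absv z) F"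
proof (induction F rule: lin_induct)
  case (1 c) then show ?case by simp
next
  case (2 a g)
  show ?case
  proof
    assume h: "\<forall>b. poly ([:-a, 1:] * g) b = 0 \<longrightarrow> absv b \<noteq> absv z"
    then have "absv (poly g z) = gauss (absv z) g" using 2 by (simp add: roots_lin_mult)
    moreover have ne: "absv a \<noteq> absv z" using h[rule_format, of a] by simp
    have "absv (z - a) = max (absv a) (absv z)"
    proof (cases "absv a < absv z")
      case True then show ?thesis using av_strict_diff[of a z] by simp
    next
      case False
      then have "absv z < absv a" using ne by simp
      then have "absv (a - z) = absv a" using av_strict_diff[of z a] by simp
      then show ?thesis using False by (simp add: av_sym)
    qed
    ultimately show "absv (poly ([:-a, 1:] * g) z) = gauss (absv z) ([:-a, 1:] * g)"
      by (simp add: av_mult gauss_mult gauss_lin poly_mult del: mult_pCons_left)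
  qed
qed


lemma main_B:
  fixes P Q :: "'a poly" and d :: nat and R :: real
  assumes Q0: "Q \<noteq> 0"
    and d: "d = max (degree P) (degree Q)"
    and nopoles: "\<forall>z. absv z < B0 absv (rat_berk absv P Q) \<longrightarrow> poly Q z \<noteq> 0"
    and R: "R > 0"
    and img: "(\<lambda>z. poly P z / poly Q z) ` {z. absv z < B0 absv (rat_berk absv P Q)}
              = {w. absv (w - poly P 0 / poly Q 0) < R}"
    and c0: "absv (poly P 0 / poly Q 0) \<le> 1" and R1: "R \<le> 1"
    and B1: "B0 absv (rat_berk absv P Q) \<le> 1"
  shows "Lip_Berk absv (rat_berk absv P Q)
           {Some (zeta absv 0 r) | r. 0 \<le> r \<and> r \<le> B0 absv (rat_berk absv P Q)}
         \<le> ereal (real d / B0 absv (rat_berk absv P Q))"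
proof -
  define B where "B = B0 absv (rat_berk absv P Q)"
  define c where "c = poly P 0 / poly Q 0"
  define q0 where "q0 = absv (poly Q 0)"
  define g where "g = P - smult c Q"
  have Bpos: "B > 0"
  proof (rule ccontr)
    assume "\<not> B > 0"
    then have "{z. absv z < B} = {}" using av_nonneg by (auto simp: not_less intro: order_trans)
    moreover have "c \<in> {w. absv (w - c) < R}" using R by simp
    moreover have "c \<in> (\<lambda>z. poly P z / poly Q z) ` {z. absv z < B}"
      using img \<open>c \<in> {w. absv (w - c) < R}\<close> unfolding B_def[symmetric] c_def[symmetric] by simp
    ultimately show False by simp
  qed
  have PQ0: "poly Q 0 \<noteq> 0" using nopoles Bpos unfolding B_def[symmetric] by auto
  have q0: "q0 > 0" using PQ0 av_pos by (simp add: q0_def)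
  have rootsQ: "\<forall>b. poly Q b = 0 \<longrightarrow> B \<le> absv b" using nopoles unfolding B_def[symmetric] by (auto simp: not_less[symmetric])
  have gQ: "gauss r Q = q0" if "0 \<le> r" "r \<le> B" for r
    using gauss_const_root[OF that(1), of Q] rootsQ that(2) by (auto simp: q0_def)
  have g0: "poly g 0 = 0" using PQ0 by (simp add: g_def c_def)
  have cg0: "coeff g 0 = 0" using g0 by (simp add: poly_0_coeff_0)
  have gz: "absv (poly g z) < q0" if z: "absv z < B" for z
  proof -
    have Qz: "poly Q z \<noteq> 0" using nopoles z unfolding B_def[symmetric] by auto
    have "poly P z / poly Q z \<in> {w. absv (w - c) < R}"
      using img z unfolding B_def[symmetric] c_def[symmetric] by blast
    then have lt: "absv (poly P z / poly Q z - c) < R" by simp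
    have "absv (poly Q z) = q0"
      using val_const_root[of Q z] rootsQ z unfolding q0_def by (auto intro: less_le_trans)
    moreover have "poly g z = poly Q z * (poly P z / poly Q z - c)" using Qz by (simp add: g_def field_simps)
    ultimately have "absv (poly g z) = q0 * absv (poly P z / poly Q z - c)" by (simp add: av_mult)
    also have "\<dots> < q0 * 1" using lt R1 q0 by (intro mult_strict_left_mono) auto
    finally show ?thesis by simp
  qed
  have glt: "gauss r g < q0" if r: "0 \<le> r" "r < B" for r
  proof (cases "g = 0")
    case True then show ?thesis using q0 by simp
  next
    case False
    have fin: "finite (absv ` {b. poly g b = 0})" using poly_roots_finite[OF False] by simp
    obtain z where z: "r < absv z" "absv z < B" "absv z \<notin> absv ` {b. poly g b = 0}"
      using av_value_group_dense[OF r(1) r(2) fin] by blast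
    have "\<forall>b. poly g b = 0 \<longrightarrow> absv b \<noteq> absv z" using z(3) by (metis (mono_tags) imageI mem_Collect_eq)
    then have "absv (poly g z) = gauss (absv z) g" using max_modulus[of g z] by simp
    moreover have "gauss r g \<le> gauss (absv z) g" using r z by (intro gauss_mono) auto
    ultimately show ?thesis using gz[OF z(2)] by linarith
  qed
  have gB: "absv (coeff g i) * B ^ i \<le> q0" for i
  proof (rule ccontr)
    assume A: "\<not> absv (coeff g i) * B ^ i \<le> q0"
    show False
    proof (cases "i = 0")
      case True then show False using A q0 cg0 by simp
    next
      case False
      define a where "a = absv (coeff g i)"
      have "a \<noteq> 0" using A q0 unfolding a_def by auto
      then have a0: "a > 0" unfolding a_def using av_nonneg[of "coeff g i"] by linarith
      define t where "t = root i (q0 / a)"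
      have t0: "t \<ge> 0" using q0 a0 by (simp add: t_def real_root_ge_zero)
      have ti: "t ^ i = q0 / a" using False q0 a0 by (simp add: t_def)
      have "q0 < a * B ^ i" using A unfolding a_def by linarith
      then have "q0 / a < B ^ i" using a0 by (simp add: pos_divide_less_eq mult.commute)
      then have "t ^ i < B ^ i" using ti by simp
      then have tB: "t < B" by (rule power_less_imp_less_base) (use Bpos in simp)
      have "a * t ^ i \<le> gauss t g" using gauss_ge[OF t0, of g i] by (simp add: a_def)
      then have "q0 \<le> gauss t g" using ti a0 by simp
      then show False using glt[OF t0 tB] by simp
    qed
  qed
  have gle: "gauss r g \<le> q0" if "0 \<le> r" "r \<le> B" for r
  proof (rule gauss_le)
    fix i
    have "absv (coeff g i) * r ^ i \<le> absv (coeff g i) * B ^ i"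
      using that by (intro mult_left_mono power_mono) auto
    then show "absv (coeff g i) * r ^ i \<le> q0" using gB[of i] by linarith
  qed
  have degg: "degree g \<le> d"
    using degree_diff_le_max[of P "smult c Q"] degree_smult_le[of c Q] unfolding d g_def by linarith
  define Y where "Y = (\<lambda>r. ratN P Q (gauss r))"
  have gQne: "gauss r Q \<noteq> 0" if "0 \<le> r" "r \<le> B" for r using gQ[OF that] q0 by simp
  have PhiZ: "rat_berk absv P Q (Some (zeta absv 0 r)) = Some (Y r)" if "0 \<le> r" "r \<le> B" for r
    using rat_berk_Some[of "gauss r" Q P] gQne[OF that] by (simp add: zeta0 Y_def)
  have Yberk: "is_berk_aff absv (Y r)" if "0 \<le> r" "r \<le> B" for r
    unfolding Y_def using ratN_berk[of "gauss r" Q P] zeta_berk[OF that(1), of 0] gQne[OF that]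
    by (simp add: zeta0)
  have Yval: "Y r f = gauss r (subst_rat P Q f) / q0 ^ degree f" if "0 \<le> r" "r \<le> B" for r f
    by (simp add: Y_def ratN_def gQ[OF that])
  have YX: "Y r [:0, 1:] \<le> 1" if r: "0 \<le> r" "r \<le> B" for r
  proof -
    have "P = g + smult c Q" by (simp add: g_def)
    then have "gauss r P \<le> max (gauss r g) (gauss r (smult c Q))" using gauss_add[OF r(1), of g "smult c Q"] by simp
    also have "\<dots> \<le> q0" using gle[OF r] c0 q0 by (simp add: gauss_smult[OF r(1)] gQ[OF r] c_def mult_left_le_one_le)
    finally show ?thesis using q0 by (simp add: Yval[OF r] subst_X)
  qed
  have Ylin: "Y r [:-a, 1:] = gauss r (g + smult (c - a) Q) / q0" if r: "0 \<le> r" "r \<le> B" for r a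
  proof -
    have "P - smult a Q = g + smult (c - a) Q" by (simp add: g_def smult_diff_left)
    then show ?thesis by (simp add: Yval[OF r] subst_lin)
  qed
  have lowb: "gauss r g \<le> gauss r (g + smult e Q)" if r: "0 \<le> r" "r \<le> B" for r e
  proof (cases "absv e * q0 \<ge> gauss r g")
    case True
    have "absv (poly (g + smult e Q) 0) = absv e * q0" using g0 by (simp add: av_mult q0_def)
    then show ?thesis using gauss_coeff0[OF r(1), of "g + smult e Q"] True by linarith
  next
    case False
    have "gauss r g \<le> max (gauss r (g + smult e Q)) (gauss r (smult e Q))"
      using gauss_diff[OF r(1), of "g + smult e Q" "smult e Q"] by simp
    moreover have "gauss r (smult e Q) = absv e * q0" by (simp add: gauss_smult[OF r(1)] gQ[OF r])
    ultimately show ?thesis using False by (simp add: max_def split: if_splits)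
  qed
  define psi where "psi = (\<lambda>r. gauss r g / q0)"
  have radY: "rad (Y r) = psi r" if r: "0 \<le> r" "r \<le> B" for r
    unfolding rad_def
  proof (rule cInf_eq_minimum)
    show "psi r \<in> range (\<lambda>a. Y r [:- a, 1:])"
      using Ylin[OF r, of c] by (auto simp: psi_def intro!: image_eqI[of _ _ c])
    fix x assume "x \<in> range (\<lambda>a. Y r [:- a, 1:])"
    then obtain a where "x = Y r [:-a, 1:]" by auto
    then show "psi r \<le> x" using Ylin[OF r, of a] lowb[OF r, of "c - a"] q0
      by (simp add: psi_def divide_right_mono)
  qed
  have Ymono: "Y r f \<le> Y s f" if "0 \<le> r" "r \<le> s" "s \<le> B" for r s f
  proof -
    have r: "0 \<le> r" "r \<le> B" and s: "0 \<le> s" "s \<le> B" using that by auto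
    show ?thesis using gauss_mono[OF that(1,2)] q0 by (simp add: Yval[OF r] Yval[OF s] divide_right_mono)
  qed
  have diamY: "diamG absv (Some (Y r)) = psi r" if "0 \<le> r" "r \<le> B" for r
    using YX[OF that] radY[OF that] by (simp add: diamG_def)
  have diamZ: "diamG absv (Some (zeta absv 0 r)) = r" if "0 \<le> r" "r \<le> B" for r
  proof -
    have "zeta absv 0 r [:0, 1:] = r" using zeta_lin[OF that(1), of 0 0] that by simp
    then show ?thesis using that B1 rad_zeta[OF that(1)] by (simp add: diamG_def B_def)
  qed
  have ZX: "zeta absv 0 r [:0, 1:] \<le> 1" if "0 \<le> r" "r \<le> B" for r
    using zeta_lin[OF that(1), of 0 0] that B1 by (simp add: B_def)
  have slope: "psi s - psi r \<le> real d / B * (s - r)" if rs: "0 \<le> r" "r \<le> s" "s \<le> B" for r s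
  proof -
    obtain i where i: "i \<le> degree g" "gauss s g = absv (coeff g i) * s ^ i" using gauss_attain by blast
    have "absv (coeff g i) * r ^ i \<le> gauss r g" using gauss_ge[OF rs(1)] .
    then have "gauss s g - gauss r g \<le> absv (coeff g i) * (s ^ i - r ^ i)" using i(2) by (simp add: right_diff_distrib)
    also have "\<dots> \<le> absv (coeff g i) * (real i * s ^ (i - 1) * (s - r))"
      by (intro mult_left_mono pow_diff_le) (use rs in auto)
    also have "\<dots> \<le> real d * q0 / B * (s - r)"
    proof (cases "i = 0")
      case True then show ?thesis using cg0 q0 Bpos rs by simp
    next
      case False
      have "absv (coeff g i) * s ^ (i - 1) \<le> absv (coeff g i) * B ^ (i - 1)"
        using rs by (intro mult_left_mono power_mono) auto
      also have "\<dots> = absv (coeff g i) * B ^ i / B" using False Bpos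
        by (simp add: power_eq_if)
      also have "\<dots> \<le> q0 / B" using gB[of i] Bpos by (simp add: divide_right_mono)
      finally have X: "absv (coeff g i) * s ^ (i - 1) \<le> q0 / B" .
      have "absv (coeff g i) * (real i * s ^ (i - 1) * (s - r)) = real i * (absv (coeff g i) * s ^ (i - 1)) * (s - r)"
        by simp
      also have "\<dots> \<le> real d * (q0 / B) * (s - r)"
        using X i(1) degg rs q0 Bpos by (intro mult_right_mono mult_mono) auto
      finally show ?thesis by simp
    qed
    finally have "gauss s g - gauss r g \<le> real d * q0 / B * (s - r)" .
    then show ?thesis using q0 unfolding psi_def by (simp add: field_simps diff_divide_distrib[symmetric])
  qed
  have ratio: "berk_dist absv (rat_berk absv P Q (Some (zeta absv 0 r))) (rat_berk absv P Q (Some (zeta absv 0 s)))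
      / berk_dist absv (Some (zeta absv 0 r)) (Some (zeta absv 0 s)) \<le> real d / B"
    if rs: "0 \<le> r" "r \<le> B" "0 \<le> s" "s \<le> B" "r \<noteq> s" for r s
  proof -
    have key: "berk_dist absv (Some (Y a)) (Some (Y b)) = psi b - psi a \<and> berk_dist absv (Some (Y b)) (Some (Y a)) = psi b - psi a
       \<and> berk_dist absv (Some (zeta absv 0 a)) (Some (zeta absv 0 b)) = b - a
       \<and> berk_dist absv (Some (zeta absv 0 b)) (Some (zeta absv 0 a)) = b - a"
      if ab: "0 \<le> a" "a \<le> b" "b \<le> B" for a b
    proof -
      have a: "0 \<le> a" "a \<le> B" and b: "0 \<le> b" "b \<le> B" using ab by auto
      have jY: "joinG absv (Some (Y a)) (Some (Y b)) = Some (Y b)" "joinG absv (Some (Y b)) (Some (Y a)) = Some (Y b)"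
        using joinG_le[OF berk_Some[OF Yberk[OF a]] berk_Some[OF Yberk[OF b]] YX[OF a] YX[OF b] Ymono[OF ab]] by auto
      have jZ: "joinG absv (Some (zeta absv 0 a)) (Some (zeta absv 0 b)) = Some (zeta absv 0 b)"
         "joinG absv (Some (zeta absv 0 b)) (Some (zeta absv 0 a)) = Some (zeta absv 0 b)"
        using joinG_le[OF berk_Some[OF zeta_berk[OF a(1)]] berk_Some[OF zeta_berk[OF b(1)]] ZX[OF a] ZX[OF b] zeta_mono[OF ab(1,2)]]
        by auto
      show ?thesis using jY jZ diamY[OF a] diamY[OF b] diamZ[OF a] diamZ[OF b] by (simp add: berk_dist_def)
    qed
    show ?thesis
    proof (cases "r < s")
      case True
      then show ?thesis using key[of r s] rs slope[of r s] PhiZ[of r] PhiZ[of s]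
        by (simp add: divide_le_eq mult.commute)
    next
      case False
      then have "s < r" using rs by simp
      then show ?thesis using key[of s r] rs slope[of s r] PhiZ[of r] PhiZ[of s]
        by (simp add: divide_le_eq mult.commute)
    qed
  qed
  show ?thesis
    unfolding Lip_Berk_def B_def[symmetric]
  proof (rule SUP_least)
    fix p assume "p \<in> {(x, y). x \<in> {Some (zeta absv 0 r) |r. 0 \<le> r \<and> r \<le> B} \<and>
                        y \<in> {Some (zeta absv 0 r) |r. 0 \<le> r \<and> r \<le> B} \<and> x \<noteq> y}"
    then obtain r s where p: "p = (Some (zeta absv 0 r), Some (zeta absv 0 s))" "0 \<le> r" "r \<le> B" "0 \<le> s" "s \<le> B" "r \<noteq> s"
      by auto
    show "ereal (berk_dist absv (rat_berk absv P Q (fst p)) (rat_berk absv P Q (snd p)) / berk_dist absv (fst p) (snd p))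
          \<le> ereal (real d / B)"
      using ratio[OF p(2-6)] p(1) by simp
  qed
qed

end

abbreviation X :: "'a::field poly" where "X \<equiv> [:0, 1:]"

lemma subst_inv: "subst_rat 1 X f = inv_poly f"
  unfolding subst_rat_def inv_poly_def by (intro sum.cong refl) (simp add: monom_altdef)

lemma H1X_coeff: "coeff (H 1 X n f) j = (if j \<le> n then coeff f (n - j) else 0)"
proof -
  have "coeff (H 1 X n f) j = (\<Sum>i\<le>n. if n - i = j then coeff f i else 0)"
    unfolding H_def by (simp add: coeff_sum monom_altdef[symmetric])
  also have "\<dots> = (if j \<le> n then coeff f (n - j) else 0)"
  proof (cases "j \<le> n")
    case True
    have "(\<Sum>i\<le>n. if n - i = j then coeff f i else 0) = (\<Sum>i\<le>n. if i = n - j then coeff f i else 0)"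
      by (intro sum.cong refl) (use True in auto)
    also have "\<dots> = coeff f (n - j)" by (subst sum.delta) auto
    finally show ?thesis using True by simp
  next
    case False
    then show ?thesis by (intro trans[OF sum.neutral]) auto
  qed
  finally show ?thesis .
qed

lemma deg_H1X: "degree (H 1 X n f) \<le> n"
  by (rule degree_le) (simp add: H1X_coeff)

lemma H1X_invol: "degree f \<le> n \<Longrightarrow> H 1 X n (H 1 X n f) = f"
  by (rule poly_eqI) (auto simp: H1X_coeff coeff_eq_0)

lemma inv_reflect: "inv_poly f = reflect_poly f"
  by (rule poly_eqI) (simp add: subst_inv[symmetric] H_deg H1X_coeff coeff_reflect_poly)

context nf begin

lemma berk_inv_Some: "N X \<noteq> 0 \<Longrightarrow> berk_inv absv (Some N) = Some (ratN 1 X N)"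
  by (simp add: berk_inv_def ratN_def subst_inv)

lemma berk_inv_Some0: "N X = 0 \<Longrightarrow> berk_inv absv (Some N) = None"
  by (simp add: berk_inv_def)

lemma ratN_X: "is_berk_aff absv N \<Longrightarrow> ratN 1 X N X = 1 / N X"
  by (simp add: ratN_def subst_X bk_1)

lemma ratN_invol: assumes N: "is_berk_aff absv N" and NX: "N X \<noteq> 0"
  shows "ratN 1 X (ratN 1 X N) = N"
proof
  fix f :: "'a poly"
  define n where "n = degree f"
  define t where "t = N X"
  have t: "t > 0" using bk_nonneg[OF N, of X] NX by (simp add: t_def)
  define M where "M = ratN 1 X N"
  have MX: "M X = 1 / t" using ratN_X[OF N] by (simp add: M_def t_def)
  define s where "s = subst_rat 1 X f"
  have s: "s = H 1 X n f" by (simp add: s_def n_def H_deg)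
  have ds: "degree s \<le> n" using deg_H1X by (simp add: s)
  have "f = H 1 X n s" using H1X_invol[of f n] by (simp add: s n_def)
  also have "\<dots> = subst_rat 1 X s * X ^ (n - degree s)" by (rule H_pad[OF ds])
  finally have "N f = N (subst_rat 1 X s) * t ^ (n - degree s)"
    by (metis bk_mult[OF N] bk_power[OF N] t_def)
  moreover have "ratN 1 X M f = M s / (M X) ^ n" by (simp add: ratN_def s_def n_def)
  moreover have "M s = N (subst_rat 1 X s) / t ^ degree s" by (simp add: M_def ratN_def t_def)
  ultimately have A: "N f = N (subst_rat 1 X s) * t ^ (n - degree s)"
    and B: "ratN 1 X M f = N (subst_rat 1 X s) / t ^ degree s / (1 / t) ^ n" by (simp_all add: MX)
  moreover have "t ^ n = t ^ (n - degree s) * t ^ degree s" using ds by (simp add: power_add[symmetric])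
  then show "ratN 1 X M f = N f" using t A B by (simp add: power_one_over field_simps)
qed

lemma invN_typeI: assumes b: "b \<noteq> 0" shows "ratN 1 X (typeI absv b) = typeI absv (inverse b)"
proof
  fix f :: "'a poly"
  have "ratN 1 X (typeI absv b) f = absv (poly (reflect_poly f) b) / absv b ^ degree f"
    by (simp add: ratN_def typeI_def subst_inv inv_reflect)
  also have "\<dots> = absv (poly f (inverse b))" using b av_pos[OF b]
    by (simp add: poly_reflect_poly_nz av_mult av_power)
  finally show "ratN 1 X (typeI absv b) f = typeI absv (inverse b) f" by (simp add: typeI_def)
qed

lemma typeI_X: "typeI absv b X = absv b" by (simp add: typeI_def)

lemma zeta_X: "0 \<le> r \<Longrightarrow> zeta absv b r X = max (absv b) r"
  using zeta_lin[of r b 0] by simp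

lemma zeta_smult_lin: assumes r: "0 \<le> r" shows "zeta absv a r (smult k [:-c, 1:]) = absv k * max (absv (a - c)) r"
  by (subst bk_smult[OF zeta_berk[OF r]]) (simp only: zeta_lin[OF r])

lemma ratN_lin: "ratN 1 X N [:-c, 1:] = N (1 - smult c X) / N X"
  by (simp add: ratN_def subst_lin)

lemma one_minus_cX: "c \<noteq> 0 \<Longrightarrow> (1 :: 'a poly) - smult c X = smult (- c) [:- inverse c, 1:]"
  by (simp add: one_pCons)

lemma typeI_inj: "typeI absv a = typeI absv b \<Longrightarrow> a = b"
proof -
  assume "typeI absv a = typeI absv b"
  then have "typeI absv a [:-b, 1:] = typeI absv b [:-b, 1:]" by simp
  then show "a = b" by (simp add: typeI_def)
qed

lemma typeI_in_Berk: "Some (typeI absv a) \<in> Berk absv"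
  using berk_Some typeI_berk by blast

end

context nf begin

lemma Berk_Some_iff: "Some N \<in> Berk absv \<longleftrightarrow> is_berk_aff absv N"
  by (auto simp: Berk_def)

lemma Qpt_A: assumes b: "absv b \<le> 1" and r: "0 < r" "r < 1"
  shows "Qpt absv (Some (typeI absv b)) r = Some (zeta absv b r)"
  unfolding Qpt_def
proof (rule the_equality)
  have r0: "0 \<le> r" using r by simp
  have icx: "in_cdisc (Some (typeI absv b))" using b by (simp add: in_cdisc_def typeI_X)
  have ZX: "zeta absv b r X \<le> 1" using b r by (simp add: zeta_X[OF r0])
  show "Some (zeta absv b r) \<in> Berk absv \<and> on_path_G absv (Some (typeI absv b)) (Some (zeta absv b r)) \<and>
    diamG absv (Some (zeta absv b r)) = r"
    using zeta_berk[OF r0, of b] icx ZX zeta_ge_typeI[OF r0] rad_zeta[OF r0]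
    by (simp add: Berk_Some_iff on_path_G_def in_cdisc_def berk_le_def typeI_def diamG_def)
  fix y assume y: "y \<in> Berk absv \<and> on_path_G absv (Some (typeI absv b)) y \<and> diamG absv y = r"
  then have "in_cdisc y" "berk_le (Some (typeI absv b)) y" using icx by (auto simp: on_path_G_def)
  then obtain N where N: "y = Some N" "N X \<le> 1" "\<And>f. typeI absv b f \<le> N f"
    by (auto simp: in_cdisc_def berk_le_def)
  have Nb: "is_berk_aff absv N" using y N(1) by (simp add: Berk_Some_iff)
  have "rad N = r" using y N by (simp add: diamG_def)
  have eq: "N = zeta absv b (N [:-b, 1:])"
    by (rule above_typeI_zeta[OF Nb]) (use N(3) in \<open>simp add: typeI_def\<close>)
  have t0: "N [:-b, 1:] \<ge> 0" using bk_nonneg[OF Nb] .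
  have "N [:-b, 1:] = r" using rad_zeta[OF t0, of b] \<open>rad N = r\<close> eq by simp
  then show "y = Some (zeta absv b r)" using eq N(1) by simp
qed

lemma Qpt_B: assumes a: "\<not> in_cdisc a" "berk_inv absv a = Some (typeI absv \<beta>)" and \<beta>: "absv \<beta> < 1"
  and r: "0 < r" "r < 1"
  shows "Qpt absv a r = Some (ratN 1 X (zeta absv \<beta> r))"
  unfolding Qpt_def
proof (rule the_equality)
  have r0: "0 \<le> r" using r by simp
  define Z where "Z = zeta absv \<beta> r"
  have Zb: "is_berk_aff absv Z" using zeta_berk[OF r0] by (simp add: Z_def)
  have ZX: "Z X = max (absv \<beta>) r" using zeta_X[OF r0] by (simp add: Z_def)
  have ZX0: "Z X > 0" "Z X < 1" using ZX r \<beta> by auto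
  define W where "W = ratN 1 X Z"
  have Wb: "is_berk_aff absv W" using ratN_berk[OF Zb] ZX0 by (simp add: W_def)
  have WX: "W X = 1 / Z X" using ratN_X[OF Zb] by (simp add: W_def)
  have invW: "berk_inv absv (Some W) = Some Z"
    using berk_inv_Some[of W] WX ZX0 ratN_invol[OF Zb] by (simp add: W_def)
  have ge: "\<And>f. typeI absv \<beta> f \<le> Z f" using zeta_ge_typeI[OF r0] by (simp add: Z_def typeI_def)
  show "Some (ratN 1 X (zeta absv \<beta> r)) \<in> Berk absv \<and> on_path_G absv a (Some (ratN 1 X (zeta absv \<beta> r))) \<and>
    diamG absv (Some (ratN 1 X (zeta absv \<beta> r))) = r"
  proof (intro conjI)
    show "Some (ratN 1 X (zeta absv \<beta> r)) \<in> Berk absv" using Wb by (simp add: W_def Z_def Berk_Some_iff)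
    have "on_path_G absv a (Some W) \<longleftrightarrow> in_cdisc (berk_inv absv (Some W)) \<and> berk_le (berk_inv absv a) (berk_inv absv (Some W))"
      using a(1) by (simp add: on_path_G_def)
    then have "on_path_G absv a (Some W)" using invW a(2) ZX0 ge by (simp add: in_cdisc_def berk_le_def)
    then show "on_path_G absv a (Some (ratN 1 X (zeta absv \<beta> r)))" by (simp add: W_def Z_def)
    have "\<not> W X \<le> 1" using WX ZX0 by simp
    then show "diamG absv (Some (ratN 1 X (zeta absv \<beta> r))) = r"
      using invW rad_zeta[OF r0] unfolding W_def[symmetric] Z_def[symmetric]
      by (simp add: diamG_def Z_def)
  qed
  fix y assume y: "y \<in> Berk absv \<and> on_path_G absv a y \<and> diamG absv y = r"
  then have p: "in_cdisc (berk_inv absv y)" "berk_le (Some (typeI absv \<beta>)) (berk_inv absv y)"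
    using a by (auto simp: on_path_G_def)
  show "y = Some (ratN 1 X (zeta absv \<beta> r))"
  proof (cases y)
    case None then show ?thesis using y r by (simp add: diamG_def)
  next
    case (Some N)
    have Nb: "is_berk_aff absv N" using y Some by (simp add: Berk_Some_iff)
    have NX: "N X \<noteq> 0" using p(1) Some by (auto simp: berk_inv_Some0 in_cdisc_def)
    define M where "M = ratN 1 X N"
    have invN: "berk_inv absv y = Some M" using berk_inv_Some[of N, OF NX] Some by (simp add: M_def)
    have Mb: "is_berk_aff absv M" using ratN_berk[OF Nb NX] by (simp add: M_def)
    have MX: "M X \<le> 1" using p(1) invN by (simp add: in_cdisc_def)
    have Mge: "\<And>f. typeI absv \<beta> f \<le> M f" using p(2) invN by (simp add: berk_le_def)
    have Meq: "M = zeta absv \<beta> (M [:-\<beta>, 1:])"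
      by (rule above_typeI_zeta[OF Mb]) (use Mge in \<open>simp add: typeI_def\<close>)
    define t where "t = M [:-\<beta>, 1:]"
    have t0: "t \<ge> 0" using bk_nonneg[OF Mb] by (simp add: t_def)
    have NM: "N = ratN 1 X M" using ratN_invol[OF Nb NX] by (simp add: M_def)
    have MXv: "M X = 1 / N X" using ratN_X[OF Nb] by (simp add: M_def)
    have NXp: "N X > 0" using bk_nonneg[OF Nb, of X] NX by simp
    show ?thesis
    proof (cases "N X \<le> 1")
      case True
      then have "M X \<ge> 1" using MXv NXp by simp
      then have "M X = 1" using MX by simp
      then have "max (absv \<beta>) t = 1" using Meq zeta_X[OF t0, of \<beta>] by (simp add: t_def)
      then have t1: "t = 1" using \<beta> by (auto simp: max_def split: if_splits)
      have rad1: "1 \<le> N [:-c, 1:]" for c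
      proof -
        have Z1X: "zeta absv \<beta> 1 X = 1" using zeta_X[of 1 \<beta>] \<beta> by simp
        have "N [:-c, 1:] = zeta absv \<beta> 1 (1 - smult c X)"
          using NM Meq t1 Z1X by (simp add: ratN_lin t_def)
        also have "\<dots> \<ge> 1"
        proof (cases "c = 0")
          case True then show ?thesis by (simp add: one_pCons)
        next
          case False
          have e: "zeta absv \<beta> 1 (1 - smult c X) = absv c * max (absv (\<beta> - inverse c)) 1"
            using one_minus_cX[OF False] zeta_smult_lin[of 1 \<beta> "-c" "inverse c"] by simp
          show ?thesis
          proof (cases "absv c \<ge> 1")
            case True
            have "1 * 1 \<le> absv c * max (absv (\<beta> - inverse c)) 1" by (rule mult_mono) (use True in auto)
            then show ?thesis unfolding e by simp
          next
            case False
            have "absv c * absv \<beta> \<le> absv c * 1" by (rule mult_left_mono) (use \<beta> in auto)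
            then have "absv (c * \<beta>) < 1" using False by (simp add: av_mult)
            then have "absv (1 - c * \<beta>) = 1" using av_strict_diff[of "c * \<beta>" 1] by simp
            moreover have "c * (\<beta> - inverse c) = - (1 - c * \<beta>)" using \<open>c \<noteq> 0\<close> by (simp add: algebra_simps)
            ultimately have "absv c * absv (\<beta> - inverse c) = 1" by (metis av_mult av_uminus)
            moreover have "absv c * absv (\<beta> - inverse c) \<le> absv c * max (absv (\<beta> - inverse c)) 1"
              by (rule mult_left_mono) auto
            ultimately show ?thesis unfolding e by simp
          qed
        qed
        finally show ?thesis .
      qed
      have "rad N \<ge> 1" unfolding rad_def by (rule cINF_greatest) (auto simp: rad1)
      moreover have "rad N = r" using y Some True by (simp add: diamG_def)
      ultimately show ?thesis using r by simp
    next
      case False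
      have "rad M = r" using y Some False invN by (simp add: diamG_def)
      then have "t = r" using rad_zeta[OF t0, of \<beta>] Meq by (simp add: t_def)
      then have "M = zeta absv \<beta> r" using Meq by (simp add: t_def)
      then show ?thesis using Some NM by simp
    qed
  qed
qed

lemma berk_inv_None: "berk_inv absv None = Some (typeI absv 0)"
  by (simp add: berk_inv_def)

lemma berk_inv_typeI: "b \<noteq> 0 \<Longrightarrow> berk_inv absv (Some (typeI absv b)) = Some (typeI absv (inverse b))"
  using berk_inv_Some[of "typeI absv b"] invN_typeI by (simp add: typeI_X)

end

context nf begin

lemma on_path_out_typeI:
  assumes x: "\<not> in_cdisc x" "berk_inv absv x = Some (typeI absv \<gamma>')" and g: "absv \<gamma>' < 1"
    and b0: "absv b0 \<le> 1" and r: "0 < r" "r < 1"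
    and p: "on_path_G absv x (Some (zeta absv b0 r))"
  shows False
proof -
  have r0: "0 \<le> r" using r by simp
  define Z where "Z = zeta absv b0 r"
  have Zb: "is_berk_aff absv Z" using zeta_berk[OF r0] by (simp add: Z_def)
  have ZX: "Z X = max (absv b0) r" using zeta_X[OF r0] by (simp add: Z_def)
  have ZX0: "Z X \<noteq> 0" using ZX r by auto
  have invy: "berk_inv absv (Some Z) = Some (ratN 1 X Z)" using berk_inv_Some[of Z] ZX0 by simp
  have pp: "in_cdisc (berk_inv absv (Some Z))" "berk_le (berk_inv absv x) (berk_inv absv (Some Z))"
    using p x(1) by (auto simp: on_path_G_def Z_def)
  have "ratN 1 X Z X \<le> 1" using pp(1) invy by (simp add: in_cdisc_def)
  then have "1 / Z X \<le> 1" using ratN_X[OF Zb] by simp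
  then have "Z X \<ge> 1" using ZX r by (simp add: divide_le_eq split: if_splits)
  then have b1: "absv b0 = 1" using ZX b0 r by (auto simp: max_def split: if_splits)
  then have b00: "b0 \<noteq> 0" by auto
  have "typeI absv \<gamma>' [:- inverse b0, 1:] \<le> ratN 1 X Z [:- inverse b0, 1:]"
    using pp(2) invy x(2) by (simp add: berk_le_def)
  moreover have "ratN 1 X Z [:- inverse b0, 1:] = r"
  proof -
    have "ratN 1 X Z [:- inverse b0, 1:] = Z (1 - smult (inverse b0) X) / Z X" by (rule ratN_lin)
    also have "\<dots> = Z (smult (- inverse b0) [:- b0, 1:])"
      using one_minus_cX[of "inverse b0"] b00 ZX b1 r by simp
    also have "\<dots> = r" using zeta_smult_lin[OF r0, of b0 "- inverse b0" b0] b1 r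
      by (simp add: Z_def av_inverse)
    finally show ?thesis .
  qed
  moreover have "absv (\<gamma>' - inverse b0) = 1"
  proof -
    have "absv \<gamma>' < absv (inverse b0)" using g b1 by (simp add: av_inverse)
    then have "absv (inverse b0 - \<gamma>') = absv (inverse b0)" by (rule av_strict_diff)
    then show ?thesis using b1 by (simp add: av_sym av_inverse)
  qed
  ultimately show False using r by (simp add: typeI_def)
qed

lemma ball_loc_A:
  assumes b0: "absv b0 \<le> 1" and r: "0 < r" "r < 1" and x: "x \<in> ball_minus absv (Some (typeI absv b0)) r"
  shows "(\<forall>\<gamma>. x = Some (typeI absv \<gamma>) \<longrightarrow> absv \<gamma> \<le> 1 \<and> absv (\<gamma> - b0) \<le> r) \<and> x \<noteq> None"
proof -
  have r0: "0 \<le> r" using r by simp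
  have p: "on_path_G absv x (Some (zeta absv b0 r))"
    using x r Qpt_A[OF b0 r] by (simp add: ball_minus_def)
  have A: "absv \<gamma> \<le> 1 \<and> absv (\<gamma> - b0) \<le> r" if xg: "x = Some (typeI absv \<gamma>)" for \<gamma>
  proof (cases "absv \<gamma> \<le> 1")
    case True
    then have "in_cdisc x" using xg by (simp add: in_cdisc_def typeI_X)
    then have "typeI absv \<gamma> [:-b0, 1:] \<le> zeta absv b0 r [:-b0, 1:]"
      using p xg by (simp add: on_path_G_def berk_le_def)
    then show ?thesis using True zeta_lin[OF r0, of b0 b0] r by (simp add: typeI_def av_sym)
  next
    case False
    then have g0: "\<gamma> \<noteq> 0" by auto
    have "\<not> in_cdisc x" using xg False by (simp add: in_cdisc_def typeI_X)
    moreover have "berk_inv absv x = Some (typeI absv (inverse \<gamma>))" using berk_inv_typeI[OF g0] xg by simp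
    moreover have "absv (inverse \<gamma>) < 1" using False by (simp add: av_inverse inverse_less_1_iff)
    ultimately show ?thesis using on_path_out_typeI[OF _ _ _ b0 r p] by blast
  qed
  have "x \<noteq> None"
  proof
    assume "x = None"
    then have "\<not> in_cdisc x" "berk_inv absv x = Some (typeI absv 0)" by (simp_all add: in_cdisc_def berk_inv_None)
    then show False using on_path_out_typeI[where \<gamma>'=0, OF _ _ _ b0 r p] by simp
  qed
  then show ?thesis using A by blast
qed

lemma ball_loc_B:
  assumes a: "\<not> in_cdisc a" "berk_inv absv a = Some (typeI absv \<beta>)" and \<beta>: "absv \<beta> < 1"
    and r: "0 < r" "r < 1" and x: "x \<in> ball_minus absv a r"
  shows "(\<forall>\<gamma>. x = Some (typeI absv \<gamma>) \<longrightarrow> absv \<gamma> > 1 \<and> absv (inverse \<gamma> - \<beta>) \<le> r) \<and> (x = None \<longrightarrow> absv \<beta> \<le> r)"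
proof -
  have r0: "0 \<le> r" using r by simp
  define Z where "Z = zeta absv \<beta> r"
  have Zb: "is_berk_aff absv Z" using zeta_berk[OF r0] by (simp add: Z_def)
  have ZX: "Z X = max (absv \<beta>) r" using zeta_X[OF r0] by (simp add: Z_def)
  have ZX0: "Z X > 0" "Z X < 1" using ZX r \<beta> by auto
  define W where "W = ratN 1 X Z"
  have WX: "W X = 1 / Z X" using ratN_X[OF Zb] by (simp add: W_def)
  have invW: "berk_inv absv (Some W) = Some Z"
    using berk_inv_Some[of W] WX ZX0 ratN_invol[OF Zb] by (simp add: W_def)
  have nW: "\<not> in_cdisc (Some W)" using WX ZX0 by (simp add: in_cdisc_def)
  have p: "on_path_G absv x (Some W)"
    using x r Qpt_B[OF a \<beta> r] by (simp add: ball_minus_def W_def Z_def)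
  have nx: "\<not> in_cdisc x" using p nW by (auto simp: on_path_G_def)
  have le: "berk_le (berk_inv absv x) (Some Z)" using p nx invW by (simp add: on_path_G_def)
  have Zlin: "Z [:-\<beta>, 1:] = r" using zeta_lin[OF r0, of \<beta> \<beta>] r by (simp add: Z_def)
  have A: "absv \<gamma> > 1 \<and> absv (inverse \<gamma> - \<beta>) \<le> r" if xg: "x = Some (typeI absv \<gamma>)" for \<gamma>
  proof -
    have g1: "absv \<gamma> > 1" using nx xg by (simp add: in_cdisc_def typeI_X)
    then have g0: "\<gamma> \<noteq> 0" by auto
    have "typeI absv (inverse \<gamma>) [:-\<beta>, 1:] \<le> Z [:-\<beta>, 1:]"
      using le xg berk_inv_typeI[OF g0] by (simp add: berk_le_def)
    then show ?thesis using g1 Zlin by (simp add: typeI_def av_sym)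
  qed
  have "absv \<beta> \<le> r" if "x = None"
  proof -
    have "typeI absv 0 [:-\<beta>, 1:] \<le> Z [:-\<beta>, 1:]" using le that by (simp add: berk_le_def berk_inv_None)
    then show ?thesis using Zlin by (simp add: typeI_def)
  qed
  then show ?thesis using A by blast
qed

lemma coprime_no_common_root:
  fixes P Q :: "'a poly"
  assumes "coprime P Q" "poly P g = 0" "poly Q g = 0" shows False
proof -
  have "[:-g, 1:] dvd P" "[:-g, 1:] dvd Q" using assms by (simp_all add: poly_eq_0_iff_dvd)
  then have "is_unit [:-g, 1:]" using assms(1) by (rule coprime_common_divisor[rotated])
  then show False by (simp add: is_unit_iff_degree)
qed

lemma B0_le_1:
  fixes P Q :: "'a poly"
  assumes Q0: "Q \<noteq> 0" and P0: "P \<noteq> 0" and cop: "coprime P Q"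
  shows "B0 absv (rat_berk absv P Q) \<le> 1"
proof -
  define Z1 where "Z1 = {g. poly P g = 0 \<and> absv g \<le> 1}"
  define Z2 where "Z2 = inverse ` {g. poly P g = 0 \<and> absv g > 1} \<union> (if degree P < degree Q then {0} else {})"
  define Q1 where "Q1 = {g. poly Q g = 0 \<and> absv g \<le> 1}"
  define Q2 where "Q2 = inverse ` {g. poly Q g = 0 \<and> absv g > 1} \<union> (if degree Q < degree P then {0} else {})"
  have finP: "finite {g. poly P g = 0}" using poly_roots_finite[OF P0] .
  have finQ: "finite {g. poly Q g = 0}" using poly_roots_finite[OF Q0] .
  have fZ1: "finite Z1" using finP unfolding Z1_def by (rule rev_finite_subset) auto
  have fQ1: "finite Q1" using finQ unfolding Q1_def by (rule rev_finite_subset) auto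
  have fZ2: "finite Z2" using finP unfolding Z2_def by (intro finite_UnI finite_imageI) (auto intro: rev_finite_subset)
  have fQ2: "finite Q2" using finQ unfolding Q2_def by (intro finite_UnI finite_imageI) (auto intro: rev_finite_subset)
  define D where "D = (\<lambda>(u, v). absv (u - v)) ` (Z1 \<times> Q1 \<union> Z2 \<times> Q2)"
  have fD: "finite D" using fZ1 fQ1 fZ2 fQ2 by (simp add: D_def)
  have ne1: "u \<noteq> v" if "u \<in> Z1" "v \<in> Q1" for u v
    using that coprime_no_common_root[OF cop] by (auto simp: Z1_def Q1_def)
  have ne2: "u \<noteq> v" if "u \<in> Z2" "v \<in> Q2" for u v
  proof
    assume uv: "u = v"
    show False
    proof (cases "u = 0")
      case True
      have "0 \<notin> inverse ` {g. poly P g = 0 \<and> absv g > 1}" by auto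
      moreover have "0 \<notin> inverse ` {g. poly Q g = 0 \<and> absv g > 1}" by auto
      ultimately show False using that uv True by (auto simp: Z2_def Q2_def split: if_splits)
    next
      case False
      have "u \<in> inverse ` {g. poly P g = 0 \<and> absv g > 1}" using that(1) False by (auto simp: Z2_def split: if_splits)
      moreover have "v \<in> inverse ` {g. poly Q g = 0 \<and> absv g > 1}" using that(2) False uv by (auto simp: Q2_def split: if_splits)
      ultimately obtain g h where "u = inverse g" "poly P g = 0" "v = inverse h" "poly Q h = 0" by auto
      then show False using uv coprime_no_common_root[OF cop] by auto
    qed
  qed
  have Dpos: "t > 0" if "t \<in> D" for t
    using that ne1 ne2 by (auto simp: D_def av_pos)
  define \<delta> where "\<delta> = Min (insert 1 D)"
  have \<delta>: "\<delta> > 0" "\<delta> \<le> 1" using fD Dpos by (auto simp: \<delta>_def)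
  have \<delta>le: "\<delta> \<le> absv (u - v)" if "(u \<in> Z1 \<and> v \<in> Q1) \<or> (u \<in> Z2 \<and> v \<in> Q2)" for u v
  proof -
    have "absv (u - v) \<in> D" using that unfolding D_def by (auto intro!: image_eqI[of _ _ "(u, v)"])
    then show ?thesis unfolding \<delta>_def using fD by (intro Min_le) auto
  qed
  define r where "r = \<delta> / 2"
  have r: "0 < r" "r < 1" "r \<le> 1" using \<delta> by (auto simp: r_def)
  have sep: False if "(u \<in> Z1 \<and> v \<in> Q1) \<or> (u \<in> Z2 \<and> v \<in> Q2)" "absv (u - b) \<le> r" "absv (v - b) \<le> r" for u v b
  proof -
    have "absv (u - v) \<le> max (absv (u - b)) (absv (v - b))"
      using av_diff[of "u - b" "v - b"] by simp
    then have "absv (u - v) \<le> r" using that(2,3) by simp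
    then show False using \<delta>le[OF that(1)] \<delta> by (simp add: r_def)
  qed
  define \<Phi> where "\<Phi> = rat_berk absv P Q"
  have pole: "(x = None \<and> degree Q < degree P) \<or> (\<exists>g. poly Q g = 0 \<and> x = Some (typeI absv g))"
    if "x \<in> Berk absv" "\<Phi> x = None" for x
  proof (cases x)
    case None then show ?thesis using that by (simp add: \<Phi>_def rat_berk_def split: if_splits)
  next
    case (Some N)
    then have Nb: "is_berk_aff absv N" using that by (simp add: Berk_Some_iff)
    have "N Q = 0" using that Some by (simp add: \<Phi>_def rat_berk_def split: if_splits)
    then show ?thesis using bk_kernel[OF Nb Q0] Some by auto
  qed
  have zero: "(x = None \<and> degree P < degree Q) \<or> (\<exists>g. poly P g = 0 \<and> x = Some (typeI absv g))"
    if "x \<in> Berk absv" "\<Phi> x = Some (typeI absv 0)" for x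
  proof (cases x)
    case None
    then have dle: "degree P \<le> degree Q" and e: "typeI absv (coeff P (degree Q) / lead_coeff Q) = typeI absv 0"
      using that by (simp_all add: \<Phi>_def rat_berk_def split: if_splits)
    have "coeff P (degree Q) = 0" using typeI_inj[OF e] Q0 by simp
    then have "degree P \<noteq> degree Q" using P0 by (metis leading_coeff_0_iff)
    then show ?thesis using None dle by simp
  next
    case (Some N)
    then have Nb: "is_berk_aff absv N" using that by (simp add: Berk_Some_iff)
    have NQ: "N Q \<noteq> 0" using that Some by (auto simp: \<Phi>_def rat_berk_def split: if_splits)
    then have "ratN P Q N = typeI absv 0" using that Some rat_berk_Some[of N Q P, OF NQ] by (simp add: \<Phi>_def)
    then have "ratN P Q N X = 0" by (simp add: typeI_def)
    then have "N P = 0" using NQ by (simp add: ratN_def subst_X)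
    then show ?thesis using bk_kernel[OF Nb P0] Some by auto
  qed
  have inS: "\<Phi> ` ball_minus absv a r \<noteq> Berk absv" if a: "a \<in> P1K absv" for a
  proof -
    obtain k b where loc: "\<And>x. x \<in> ball_minus absv a r \<Longrightarrow>
        (\<forall>g. x = Some (typeI absv g) \<longrightarrow> (if k then absv g \<le> 1 \<and> absv (g - b) \<le> r else absv g > 1 \<and> absv (inverse g - b) \<le> r))
        \<and> (x = None \<longrightarrow> \<not> k \<and> absv b \<le> r)"
    proof -
      consider (A) b0 where "a = Some (typeI absv b0)" "absv b0 \<le> 1"
        | (B) \<beta> where "\<not> in_cdisc a" "berk_inv absv a = Some (typeI absv \<beta>)" "absv \<beta> < 1"
      proof -
        show ?thesis
        proof (cases a)
          case None
          then show ?thesis using that(2)[of 0] by (simp add: in_cdisc_def berk_inv_None)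
        next
          case (Some N)
          then obtain b0 where b0: "a = Some (typeI absv b0)" using a by (auto simp: P1K_def)
          show ?thesis
          proof (cases "absv b0 \<le> 1")
            case True then show ?thesis using that(1) b0 by blast
          next
            case False
            then have "b0 \<noteq> 0" by auto
            then show ?thesis using that(2)[of "inverse b0"] b0 False berk_inv_typeI
              by (simp add: in_cdisc_def typeI_X av_inverse inverse_less_1_iff)
          qed
        qed
      qed
      then show ?thesis
      proof cases
        case A
        show ?thesis using ball_loc_A[OF A(2) r(1,2)] A(1) by (intro that[of True b0]) auto
      next
        case B
        show ?thesis using ball_loc_B[OF B r(1,2)] by (intro that[of False \<beta>]) auto
      qed
    qed
    have polechart: "\<exists>v. (if k then v \<in> Q1 else v \<in> Q2) \<and> absv (v - b) \<le> r"
      if "x \<in> ball_minus absv a r" "\<Phi> x = None" for x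
    proof -
      have xB: "x \<in> Berk absv" using that(1) r by (simp add: ball_minus_def)
      from pole[OF xB that(2)] show ?thesis
      proof
        assume "x = None \<and> degree Q < degree P"
        then show ?thesis using loc[OF that(1)] by (intro exI[of _ 0]) (simp add: Q2_def)
      next
        assume "\<exists>g. poly Q g = 0 \<and> x = Some (typeI absv g)"
        then obtain g where g: "poly Q g = 0" "x = Some (typeI absv g)" by blast
        show ?thesis
        proof (cases k)
          case True then show ?thesis using loc[OF that(1)] g by (intro exI[of _ g]) (simp add: Q1_def)
        next
          case False then show ?thesis using loc[OF that(1)] g by (intro exI[of _ "inverse g"]) (auto simp: Q2_def)
        qed
      qed
    qed
    have zerochart: "\<exists>u. (if k then u \<in> Z1 else u \<in> Z2) \<and> absv (u - b) \<le> r"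
      if "x \<in> ball_minus absv a r" "\<Phi> x = Some (typeI absv 0)" for x
    proof -
      have xB: "x \<in> Berk absv" using that(1) r by (simp add: ball_minus_def)
      from zero[OF xB that(2)] show ?thesis
      proof
        assume "x = None \<and> degree P < degree Q"
        then show ?thesis using loc[OF that(1)] by (intro exI[of _ 0]) (simp add: Z2_def)
      next
        assume "\<exists>g. poly P g = 0 \<and> x = Some (typeI absv g)"
        then obtain g where g: "poly P g = 0" "x = Some (typeI absv g)" by blast
        show ?thesis
        proof (cases k)
          case True then show ?thesis using loc[OF that(1)] g by (intro exI[of _ g]) (simp add: Z1_def)
        next
          case False then show ?thesis using loc[OF that(1)] g by (intro exI[of _ "inverse g"]) (auto simp: Z2_def)
        qed
      qed
    qed
    show ?thesis
    proof (cases "\<exists>x \<in> ball_minus absv a r. \<Phi> x = None")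
      case False
      then have "None \<notin> \<Phi> ` ball_minus absv a r" by force
      moreover have "None \<in> Berk absv" by (simp add: Berk_def)
      ultimately show ?thesis by blast
    next
      case True
      then obtain x0 where x0: "x0 \<in> ball_minus absv a r" "\<Phi> x0 = None" by blast
      obtain v where v: "if k then v \<in> Q1 else v \<in> Q2" "absv (v - b) \<le> r" using polechart[OF x0] by blast
      have "Some (typeI absv 0) \<notin> \<Phi> ` ball_minus absv a r"
      proof
        assume "Some (typeI absv 0) \<in> \<Phi> ` ball_minus absv a r"
        then obtain x where x: "x \<in> ball_minus absv a r" "\<Phi> x = Some (typeI absv 0)" by force
        obtain u where u: "if k then u \<in> Z1 else u \<in> Z2" "absv (u - b) \<le> r" using zerochart[OF x] by blast
        have "(u \<in> Z1 \<and> v \<in> Q1) \<or> (u \<in> Z2 \<and> v \<in> Q2)" using u(1) v(1) by (cases k) auto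
        then show False using sep u(2) v(2) by blast
      qed
      moreover have "Some (typeI absv 0) \<in> Berk absv" by (rule typeI_in_Berk)
      ultimately show ?thesis by blast
    qed
  qed
  define S where "S = {r. 0 < r \<and> r \<le> 1 \<and> (\<forall>a\<in>P1K absv. rat_berk absv P Q ` ball_minus absv a r \<noteq> Berk absv)}"
  have "r \<in> S" using r inS by (simp add: S_def \<Phi>_def)
  then have "Sup S \<le> 1" by (intro cSup_least) (auto simp: S_def)
  then show ?thesis by (simp add: B0_def S_def)
qed

end

theorem proposition5p2:
  fixes absv :: "'a::field \<Rightarrow> real" and P Q :: "'a poly" and d :: nat and R :: real
  assumes K: "nonarch_cac_field absv"
    and Q0: "Q \<noteq> 0" and cop: "coprime P Q"
    and d: "d = max (degree P) (degree Q)" and d1: "d \<ge> 1"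
    and nopoles: "\<forall>z. absv z < B0 absv (rat_berk absv P Q) \<longrightarrow> poly Q z \<noteq> 0"
    and R: "R > 0"
    and img: "(\<lambda>z. poly P z / poly Q z) ` {z. absv z < B0 absv (rat_berk absv P Q)}
              = {w. absv (w - poly P 0 / poly Q 0) < R}"
    and c0: "absv (poly P 0 / poly Q 0) \<le> 1" and R1: "R \<le> 1"
  shows "Lip_Berk absv (rat_berk absv P Q)
           {Some (zeta absv 0 r) | r. 0 \<le> r \<and> r \<le> B0 absv (rat_berk absv P Q)}
         \<le> ereal (real d / B0 absv (rat_berk absv P Q))"
proof -
  interpret nf absv by unfold_locales (rule K)
  have P0: "P \<noteq> 0"
  proof
    assume "P = 0"
    then have "is_unit Q" using cop by simp
    then have "degree Q = 0" using Q0 by (simp add: is_unit_iff_degree)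
    then show False using d d1 \<open>P = 0\<close> by simp
  qed
  have "B0 absv (rat_berk absv P Q) \<le> 1" by (rule B0_le_1[OF Q0 P0 cop])
  then show ?thesis by (rule main_B[OF Q0 d nopoles R img c0 R1])
qed

end
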